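(* Let $L, M, N$ be positive integers and $\sigma_w^2>0$. For each $n\in\{1,\dots,N\}$ let $\bm{s}_n\in\mathbb{C}^L$, $\overline{\bm{h}}_n\in\mathbb{C}^M$, and let $\bm{R}_n\in\mathbb{C}^{M\times M}$ be Hermitian positive semidefinite with $r_n=\operatorname{rank}(\bm{R}_n)$; let $\bm{R}_n^{1/2}\in\mathbb{C}^{M\times r_n}$ satisfy $\bm{R}_n^{1/2}(\bm{R}_n^{1/2})^H=\bm{R}_n$, and set $\bm{X}_n=\bm{R}_n^{1/2}\otimes\bm{s}_n\in\mathbb{C}^{LM\times r_n}$. Let $\bm{y}\in\mathbb{C}^{LM}$ be given. For $\bm{a}\in[0,1]^N$ define $$\bm{\Sigma}_{\bm{a}}=\sum_{n=1}^N a_n\,\bm{R}_n\otimes(\bm{s}_n\bm{s}_n^H)+\sigma_w^2\bm{I}_{LM},\qquad \overline{\bm{y}}_{\bm{a}}=\sum_{n=1}^N a_n\,\overline{\bm{h}}_n\otimes\bm{s}_n,$$ $$f(\bm{a})=\log|\bm{\Sigma}_{\bm{a}}|+(\bm{y}-\overline{\bm{y}}_{\bm{a}})^H\bm{\Sigma}_{\bm{a}}^{-1}(\bm{y}-\overline{\bm{y}}_{\bm{a}}).$$ Let $\ell>0$ be a Lipschitz constant of $\nabla f$ on $[0,1]^N$. For $\bm{a}\in[0,1]^N$ and $n\in\{1,\dots,N\}$, write $\bm{b}_n=\overline{\bm{h}}_n\otimes\bm{s}_n$, $\bm{r}=\bm{y}-\overline{\bm{y}}_{\bm{a}}$, $\bm{\Sigma}=\bm{\Sigma}_{\bm{a}}$,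 $\bm{G}_n=\bm{X}_n^H\bm{\Sigma}^{-1}\bm{X}_n$, and define the quartic polynomial in $d\in\mathbb{R}$ $$\begin{aligned}p_{\mathrm{approx}}(d)={}&f(\bm{a})+d\,\operatorname{tr}(\bm{G}_n)-2d\operatorname{Re}\big(\bm{r}^H\bm{\Sigma}^{-1}\bm{b}_n\big)+d^2\,\bm{b}_n^H\bm{\Sigma}^{-1}\bm{b}_n\\&-d\,\bm{r}^H\bm{\Sigma}^{-1}\bm{X}_n(\bm{I}_{r_n}-d\,\bm{G}_n)\bm{X}_n^H\bm{\Sigma}^{-1}\bm{r}\\&+2d^2\operatorname{Re}\big(\bm{r}^H\bm{\Sigma}^{-1}\bm{X}_n(\bm{I}_{r_n}-d\,\bm{G}_n)\bm{X}_n^H\bm{\Sigma}^{-1}\bm{b}_n\big)\\&-d^3\,\bm{b}_n^H\bm{\Sigma}^{-1}\bm{X}_n(\bm{I}_{r_n}-d\,\bm{G}_n)\bm{X}_n^H\bm{\Sigma}^{-1}\bm{b}_n.\end{aligned}$$ Then there exists a constant $c>0$ such that for every $\bm{a}\in[0,1]^N$, every $n\in\{1,\dots,N\}$ and every $\mu\ge \ell+c$, any minimizer $\bar d$ of $p_{\mathrm{approx}}(d)+\frac{\mu}{2}d^2$ over $d\in[-a_n,1-a_n]$ satisfies $$f(\bm{a}+\bar d\,\bm{e}_n)\le f(\bm{a})-\frac{[\mathcal{V}(\bm{a})]_n^2}{2(\mu+c)},$$ where $\bm{e}_n$ is the $n$-th standard basis vector of $\mathbb{R}^N$ and $\mathcal{V}(\bm{a})=\big|\operatorname{Proj}(\bm{a}-\nabla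 f(\bm{a}))-\bm{a}\big|\in\mathbb{R}^N_+$, with $\operatorname{Proj}$ the coordinatewise projection onto $[0,1]$ and $|\cdot|$ the coordinatewise absolute value.
   Context: $|\cdot|$ applied to a matrix denotes its determinant; $\otimes$ is the Kronecker product; $(\cdot)^H$ is conjugate transpose. The gradient of $f$ has components $[\nabla f(\bm{a})]_n=\operatorname{tr}(\bm{X}_n^H\bm{\Sigma}_{\bm{a}}^{-1}\bm{X}_n)-\|\bm{X}_n^H\bm{\Sigma}_{\bm{a}}^{-1}(\bm{y}-\overline{\bm{y}}_{\bm{a}})\|_2^2-2\operatorname{Re}\big((\bm{y}-\overline{\bm{y}}_{\bm{a}})^H\bm{\Sigma}_{\bm{a}}^{-1}(\overline{\bm{h}}_n\otimes\bm{s}_n)\big)$. The function $f$ is the negative log-likelihood (up to constants) of the MLE device activity detection problem, minimized over $\bm{a}\in[0,1]^N$. *)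

theory Defs
  imports "Jordan_Normal_Form.Schur_Decomposition" "Jordan_Normal_Form.DL_Rank"
    "Jordan_Normal_Form.Gauss_Jordan_Elimination"
begin

(* Devices are indexed 0-based: n \<in> {0..<N}.  Vectors a \<in> R^N are functions nat \<Rightarrow> real,
   only the entries below N matter. *)

definition kron :: "complex mat \<Rightarrow> complex mat \<Rightarrow> complex mat" where
  "kron A B = mat (dim_row A * dim_row B) (dim_col A * dim_col B)
     (\<lambda>(i,j). A $$ (i div dim_row B, j div dim_col B) * B $$ (i mod dim_row B, j mod dim_col B))"

definition kron_vec :: "complex vec \<Rightarrow> complex vec \<Rightarrow> complex vec" where
  "kron_vec u v = vec (dim_vec u * dim_vec v) (\<lambda>i. u $ (i div dim_vec v) * v $ (i mod dim_vec v))"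

definition mtrace :: "complex mat \<Rightarrow> complex" where
  "mtrace A = (\<Sum>i<dim_row A. A $$ (i,i))"

definition hform :: "complex vec \<Rightarrow> complex mat \<Rightarrow> complex vec \<Rightarrow> complex" where
  "hform u A v = conjugate u \<bullet> (A *\<^sub>v v)"

definition vnorm2 :: "complex vec \<Rightarrow> real" where
  "vnorm2 v = (\<Sum>i<dim_vec v. (cmod (v $ i))^2)"

definition minv :: "complex mat \<Rightarrow> complex mat" where
  "minv A = the (mat_inverse A)"

definition hermitian_psd :: "nat \<Rightarrow> complex mat \<Rightarrow> bool" where
  "hermitian_psd m A \<longleftrightarrow> A \<in> carrier_mat m m \<and> mat_adjoint A = A \<and>
     (\<forall>v \<in> carrier_vec m. 0 \<le> Re (hform v A v))"

definition outer :: "complex vec \<Rightarrow> complex mat" where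
  "outer s = mat (dim_vec s) (dim_vec s) (\<lambda>(i,j). s $ i * cnj (s $ j))"

definition Sig :: "nat \<Rightarrow> nat \<Rightarrow> nat \<Rightarrow> (nat \<Rightarrow> complex vec) \<Rightarrow> (nat \<Rightarrow> complex mat) \<Rightarrow> real
    \<Rightarrow> (nat \<Rightarrow> real) \<Rightarrow> complex mat" where
  "Sig N L M s R sw2 a = mat (M*L) (M*L) (\<lambda>(i,j).
      (\<Sum>n<N. complex_of_real (a n) * kron (R n) (outer (s n)) $$ (i,j))
      + (if i = j then complex_of_real sw2 else 0))"

definition bvec :: "(nat \<Rightarrow> complex vec) \<Rightarrow> (nat \<Rightarrow> complex vec) \<Rightarrow> nat \<Rightarrow> complex vec" where
  "bvec s hb n = kron_vec (hb n) (s n)"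

definition ybar :: "nat \<Rightarrow> nat \<Rightarrow> nat \<Rightarrow> (nat \<Rightarrow> complex vec) \<Rightarrow> (nat \<Rightarrow> complex vec)
    \<Rightarrow> (nat \<Rightarrow> real) \<Rightarrow> complex vec" where
  "ybar N L M s hb a = vec (M*L) (\<lambda>i. \<Sum>n<N. complex_of_real (a n) * bvec s hb n $ i)"

definition resid where
  "resid N L M s hb y a = y - ybar N L M s hb a"

definition Xm :: "nat \<Rightarrow> (nat \<Rightarrow> complex vec) \<Rightarrow> (nat \<Rightarrow> complex mat) \<Rightarrow> nat \<Rightarrow> complex mat" where
  "Xm L s Rh n = kron (Rh n) (mat_of_cols L [s n])"

(* f(a) = log|Sigma_a| + (y - ybar_a)^H Sigma_a^{-1} (y - ybar_a)  (both terms real) *)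
definition fobj where
  "fobj N L M s hb R sw2 y a =
     ln (Re (det (Sig N L M s R sw2 a)))
     + Re (hform (resid N L M s hb y a) (minv (Sig N L M s R sw2 a)) (resid N L M s hb y a))"

definition gradf where
  "gradf N L M s hb R Rh sw2 y a n =
    (let Si = minv (Sig N L M s R sw2 a); X = Xm L s Rh n; r = resid N L M s hb y a in
     Re (mtrace (mat_adjoint X * Si * X))
     - vnorm2 ((mat_adjoint X * Si) *\<^sub>v r)
     - 2 * Re (hform r Si (bvec s hb n)))"

definition p_approx where
  "p_approx N L M s hb R Rh sw2 y a n d =
    (let Si = minv (Sig N L M s R sw2 a); X = Xm L s Rh n; r = resid N L M s hb y a;
         b = bvec s hb n; G = mat_adjoint X * Si * X;
         Q = Si * X * (1\<^sub>m (dim_col X) - complex_of_real d \<cdot>\<^sub>m G) * mat_adjoint X * Si in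
     fobj N L M s hb R sw2 y a + d * Re (mtrace G) - 2 * d * Re (hform r Si b)
     + d^2 * Re (hform b Si b) - d * Re (hform r Q r)
     + 2 * d^2 * Re (hform r Q b) - d^3 * Re (hform b Q b))"

definition in_box :: "nat \<Rightarrow> (nat \<Rightarrow> real) \<Rightarrow> bool" where
  "in_box N a \<longleftrightarrow> (\<forall>n<N. 0 \<le> a n \<and> a n \<le> 1)"

definition proj01 :: "real \<Rightarrow> real" where
  "proj01 x = max 0 (min 1 x)"

definition Vres where
  "Vres N L M s hb R Rh sw2 y a n = \<bar>proj01 (a n - gradf N L M s hb R Rh sw2 y a n) - a n\<bar>"

end

theory Submission
  imports Defs
begin

lemma vnorm2_nonneg: "0 \<le> vnorm2 v"
  unfolding vnorm2_def by (auto intro: sum_nonneg)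

lemma cnj_mult_self: "cnj z * z = (complex_of_real (cmod z))^2"
  using complex_norm_square[of z] by (simp add: mult.commute)

lemma conj_sprod_self: "conjugate v \<bullet> v = complex_of_real (vnorm2 v)"
  unfolding vnorm2_def scalar_prod_def
  by (simp add: lessThan_atLeast0, intro sum.cong refl) (simp add: cnj_mult_self)

lemma real_cs:
  fixes a b :: "nat \<Rightarrow> real"
  shows "(\<Sum>i\<in>A. a i * b i)^2 \<le> (\<Sum>i\<in>A. (a i)^2) * (\<Sum>i\<in>A. (b i)^2)"
proof -
  have "0 \<le> (\<Sum>i\<in>A. \<Sum>j\<in>A. (a i * b j - a j * b i)^2)"
    by (intro sum_nonneg) auto
  also have "\<dots> = (\<Sum>i\<in>A. \<Sum>j\<in>A. (a i)^2 * (b j)^2 + (a j)^2 * (b i)^2 - 2 * ((a i * b i) * (a j * b j)))"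
    by (intro sum.cong refl) (simp add: power2_eq_square algebra_simps)
  also have "\<dots> = (\<Sum>i\<in>A. \<Sum>j\<in>A. (a i)^2 * (b j)^2) + (\<Sum>i\<in>A. \<Sum>j\<in>A. (a j)^2 * (b i)^2)
       - 2 * (\<Sum>i\<in>A. \<Sum>j\<in>A. (a i * b i) * (a j * b j))"
    by (simp add: sum_subtractf sum.distrib sum_distrib_left)
  also have "(\<Sum>i\<in>A. \<Sum>j\<in>A. (a j)^2 * (b i)^2) = (\<Sum>i\<in>A. \<Sum>j\<in>A. (a i)^2 * (b j)^2)"
    using sum.swap[of "\<lambda>i j. (a j)^2 * (b i)^2" A A] by simp
  also have "(\<Sum>i\<in>A. \<Sum>j\<in>A. (a i)^2 * (b j)^2) = (\<Sum>i\<in>A. (a i)^2) * (\<Sum>i\<in>A. (b i)^2)"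
    by (simp only: sum_product)
  also have "(\<Sum>i\<in>A. \<Sum>j\<in>A. (a i * b i) * (a j * b j)) = (\<Sum>i\<in>A. a i * b i)^2"
    by (simp only: sum_product power2_eq_square)
  finally show ?thesis by simp
qed

lemma cs_sum:
  fixes u v :: "nat \<Rightarrow> complex"
  shows "(cmod (\<Sum>i\<in>A. u i * v i))^2 \<le> (\<Sum>i\<in>A. (cmod (u i))^2) * (\<Sum>i\<in>A. (cmod (v i))^2)"
proof -
  have "cmod (\<Sum>i\<in>A. u i * v i) \<le> (\<Sum>i\<in>A. cmod (u i) * cmod (v i))"
    by (rule order_trans[OF norm_sum]) (simp add: norm_mult)
  hence "(cmod (\<Sum>i\<in>A. u i * v i))^2 \<le> (\<Sum>i\<in>A. cmod (u i) * cmod (v i))^2"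
    by (simp add: power_mono)
  also have "\<dots> \<le> (\<Sum>i\<in>A. (cmod (u i))^2) * (\<Sum>i\<in>A. (cmod (v i))^2)" by (rule real_cs)
  finally show ?thesis .
qed

lemma cs_vec:
  assumes "u \<in> carrier_vec n" "v \<in> carrier_vec n"
  shows "(cmod (conjugate u \<bullet> v))^2 \<le> vnorm2 u * vnorm2 v"
  using assms cs_sum[of "\<lambda>i. cnj (u $ i)" "\<lambda>i. v $ i" "{0..<n}"]
  unfolding vnorm2_def scalar_prod_def by (simp add: lessThan_atLeast0)

lemma cmod_le_sq: "cmod z \<le> 1 + (cmod z)^2"
proof (cases "cmod z \<le> 1")
  case False
  then have "cmod z \<le> cmod z * cmod z" using mult_left_mono[of 1 "cmod z" "cmod z"] by simp
  thus ?thesis by (simp add: power2_eq_square)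
qed (smt (verit) zero_le_power2)

lemma vnorm2_entry: "i < dim_vec v \<Longrightarrow> (cmod (v $ i))^2 \<le> vnorm2 v"
  unfolding vnorm2_def by (rule member_le_sum) auto

definition fro :: "complex mat \<Rightarrow> real" where
  "fro A = (\<Sum>i<dim_row A. \<Sum>j<dim_col A. (cmod (A $$ (i,j)))^2)"

lemma fro_nonneg: "0 \<le> fro A" unfolding fro_def by (auto intro!: sum_nonneg)

lemma vnorm2_mult: assumes "v \<in> carrier_vec (dim_col A)"
  shows "vnorm2 (A *\<^sub>v v) \<le> fro A * vnorm2 v"
proof -
  have "vnorm2 (A *\<^sub>v v) = (\<Sum>i<dim_row A. (cmod (row A i \<bullet> v))^2)"
    unfolding vnorm2_def by simp
  also have "\<dots> \<le> (\<Sum>i<dim_row A. (\<Sum>j<dim_col A. (cmod (A $$ (i,j)))^2) * vnorm2 v)"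
  proof (rule sum_mono)
    fix i assume i: "i \<in> {..<dim_row A}"
    have "row A i \<bullet> v = (\<Sum>j\<in>{0..<dim_col A}. A $$ (i,j) * v $ j)"
      using assms i unfolding scalar_prod_def by auto
    thus "(cmod (row A i \<bullet> v))^2 \<le> (\<Sum>j<dim_col A. (cmod (A $$ (i,j)))^2) * vnorm2 v"
      using cs_sum[of "\<lambda>j. A $$ (i,j)" "\<lambda>j. v $ j" "{0..<dim_col A}"] assms
      unfolding vnorm2_def by (simp add: lessThan_atLeast0)
  qed
  also have "\<dots> = fro A * vnorm2 v" unfolding fro_def by (simp add: sum_distrib_right)
  finally show ?thesis .
qed

lemma vnorm2_add: assumes "u \<in> carrier_vec n" "v \<in> carrier_vec n"
  shows "vnorm2 (u + v) \<le> 2 * (vnorm2 u + vnorm2 v)"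
proof -
  have "vnorm2 (u + v) = (\<Sum>i<n. (cmod (u $ i + v $ i))^2)" using assms unfolding vnorm2_def by simp
  also have "\<dots> \<le> (\<Sum>i<n. 2 * ((cmod (u $ i))^2 + (cmod (v $ i))^2))"
  proof (rule sum_mono)
    fix i
    have "cmod (u $ i + v $ i) \<le> cmod (u $ i) + cmod (v $ i)" by (rule norm_triangle_ineq)
    hence "(cmod (u $ i + v $ i))^2 \<le> (cmod (u $ i) + cmod (v $ i))^2" by (simp add: power_mono)
    also have "\<dots> \<le> 2 * ((cmod (u $ i))^2 + (cmod (v $ i))^2)"
    proof -
      have "0 \<le> (cmod (u $ i) - cmod (v $ i))^2" by simp
      thus ?thesis by (simp add: power2_eq_square algebra_simps)
    qed
    finally show "(cmod (u $ i + v $ i))^2 \<le> 2 * ((cmod (u $ i))^2 + (cmod (v $ i))^2)" .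
  qed
  also have "\<dots> = 2 * (vnorm2 u + vnorm2 v)" using assms unfolding vnorm2_def
    by (simp add: sum_distrib_left sum.distrib)
  finally show ?thesis .
qed

lemma vnorm2_smult: "vnorm2 (c \<cdot>\<^sub>v v) = (cmod c)^2 * vnorm2 v"
  unfolding vnorm2_def by (simp add: norm_mult power_mult_distrib sum_distrib_left)

lemma vnorm2_uminus: "vnorm2 (- v) = vnorm2 v"
  unfolding vnorm2_def by simp


lemma adj_dim[simp]: fixes A :: "complex mat" shows "dim_row (mat_adjoint A) = dim_col A" "dim_col (mat_adjoint A) = dim_row A"
  unfolding mat_adjoint_def by auto

lemma adj_carrier[simp]: fixes A :: "complex mat" shows "A \<in> carrier_mat n m \<Longrightarrow> mat_adjoint A \<in> carrier_mat m n"
  unfolding carrier_mat_def by simp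

lemma adj_index[simp]: "i < dim_col A \<Longrightarrow> j < dim_row A \<Longrightarrow> mat_adjoint A $$ (i,j) = cnj (A $$ (j,i))"
  unfolding mat_adjoint_def by (simp add: mat_of_rows_index)

lemma adj_adj[simp]: fixes A :: "complex mat" shows "mat_adjoint (mat_adjoint A) = A"
  by (rule eq_matI) auto

lemma adj_one[simp]: shows "mat_adjoint (1\<^sub>m n :: complex mat) = 1\<^sub>m n"
  by (rule eq_matI) auto

lemma adj_mult: fixes A B :: "complex mat" assumes "A \<in> carrier_mat n k" "B \<in> carrier_mat k l"
  shows "mat_adjoint (A * B) = mat_adjoint B * mat_adjoint A"
proof (rule eq_matI)
  fix i j assume i: "i < dim_row (mat_adjoint B * mat_adjoint A)" and j: "j < dim_col (mat_adjoint B * mat_adjoint A)"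
  hence i': "i < l" and j': "j < n" using assms by auto
  have "mat_adjoint (A * B) $$ (i,j) = cnj (\<Sum>t\<in>{0..<k}. A $$ (j,t) * B $$ (t,i))"
    using assms i' j' by (simp add: scalar_prod_def)
  also have "\<dots> = (\<Sum>t\<in>{0..<k}. cnj (B $$ (t,i)) * cnj (A $$ (j,t)))"
    by (simp add: mult.commute)
  also have "\<dots> = (mat_adjoint B * mat_adjoint A) $$ (i,j)"
    using assms i' j' by (simp add: scalar_prod_def)
  finally show "mat_adjoint (A * B) $$ (i,j) = (mat_adjoint B * mat_adjoint A) $$ (i,j)" .
qed (use assms in auto)

lemma adj_sprod: fixes A :: "complex mat" assumes A: "A \<in> carrier_mat n k" and w: "w \<in> carrier_vec k" and z: "z \<in> carrier_vec n"
  shows "conjugate (A *\<^sub>v w) \<bullet> z = conjugate w \<bullet> (mat_adjoint A *\<^sub>v z)"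
proof -
  have "conjugate (A *\<^sub>v w) \<bullet> z = (\<Sum>i\<in>{0..<n}. cnj (\<Sum>j\<in>{0..<k}. A $$ (i,j) * w $ j) * z $ i)"
    using assms by (simp add: scalar_prod_def)
  also have "\<dots> = (\<Sum>i\<in>{0..<n}. \<Sum>j\<in>{0..<k}. cnj (w $ j) * (cnj (A $$ (i,j)) * z $ i))"
    by (simp add: sum_distrib_right sum_distrib_left mult.commute mult.left_commute)
  also have "\<dots> = (\<Sum>j\<in>{0..<k}. \<Sum>i\<in>{0..<n}. cnj (w $ j) * (cnj (A $$ (i,j)) * z $ i))"
    by (rule sum.swap)
  also have "\<dots> = (\<Sum>j\<in>{0..<k}. cnj (w $ j) * (\<Sum>i\<in>{0..<n}. cnj (A $$ (i,j)) * z $ i))"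
    by (simp add: sum_distrib_left)
  also have "\<dots> = conjugate w \<bullet> (mat_adjoint A *\<^sub>v z)"
    using assms by (simp add: scalar_prod_def)
  finally show ?thesis .
qed

lemma cnj_conj_sprod: fixes v x :: "complex vec" assumes "v \<in> carrier_vec n" "x \<in> carrier_vec n"
  shows "cnj (conjugate v \<bullet> x) = conjugate x \<bullet> v"
  using assms by (simp add: scalar_prod_def mult.commute)

lemma hform_herm: assumes A: "A \<in> carrier_mat n n" and h: "mat_adjoint A = A"
  and u: "u \<in> carrier_vec n" and v: "v \<in> carrier_vec n"
  shows "hform u A v = cnj (hform v A u)"
proof -
  have "cnj (hform v A u) = conjugate (A *\<^sub>v u) \<bullet> v"
    unfolding hform_def using A u v by (simp add: cnj_conj_sprod[of _ n])
  also have "\<dots> = conjugate u \<bullet> (A *\<^sub>v v)" using adj_sprod[OF A u v] h by simp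
  finally show ?thesis unfolding hform_def by simp
qed

lemma hform_self_real: assumes A: "A \<in> carrier_mat n n" and h: "mat_adjoint A = A"
  and u: "u \<in> carrier_vec n"
  shows "Im (hform u A u) = 0"
  using hform_herm[OF A h u u] by (metis cnj.simps(2) neg_equal_zero)

lemma kron_XX:
  assumes Rh: "Rh \<in> carrier_mat M r" and s: "s \<in> carrier_vec L" and L: "L > 0"
  shows "kron Rh (mat_of_cols L [s]) * mat_adjoint (kron Rh (mat_of_cols L [s]))
       = kron (Rh * mat_adjoint Rh) (outer s)"
proof (rule eq_matI)
  let ?X = "kron Rh (mat_of_cols L [s])"
  have dX: "dim_row ?X = M * L" "dim_col ?X = r" using assms unfolding kron_def by auto
  fix i j assume i: "i < dim_row (kron (Rh * mat_adjoint Rh) (outer s))"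
    and j: "j < dim_col (kron (Rh * mat_adjoint Rh) (outer s))"
  have i': "i < M * L" and j': "j < M * L" using i j assms unfolding kron_def outer_def by auto
  have idiv: "i div L < M" "j div L < M" using i' j' by (auto simp: less_mult_imp_div_less)
  have imod: "i mod L < L" "j mod L < L" using L by auto
  have Xe: "\<And>a t. a < M * L \<Longrightarrow> t < r \<Longrightarrow> ?X $$ (a,t) = Rh $$ (a div L, t) * s $ (a mod L)"
    using assms by (simp add: kron_def mat_of_cols_index less_mult_imp_div_less)
  have "(?X * mat_adjoint ?X) $$ (i,j) = (\<Sum>t\<in>{0..<r}. ?X $$ (i,t) * cnj (?X $$ (j,t)))"
    using i' j' dX by (simp add: scalar_prod_def)
  also have "\<dots> = (\<Sum>t\<in>{0..<r}. Rh $$ (i div L, t) * cnj (Rh $$ (j div L, t))) * (s $ (i mod L) * cnj (s $ (j mod L)))"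
    using i' j' by (simp add: Xe sum_distrib_right sum_distrib_left mult.commute mult.left_commute)
  also have "\<dots> = kron (Rh * mat_adjoint Rh) (outer s) $$ (i,j)"
    using assms i' j' idiv imod by (simp add: kron_def outer_def scalar_prod_def)
  finally show "(?X * mat_adjoint ?X) $$ (i,j) = kron (Rh * mat_adjoint Rh) (outer s) $$ (i,j)" .
qed (use assms in \<open>auto simp: kron_def outer_def\<close>)


lemma hform_sum: fixes A :: "complex mat"
  assumes "A \<in> carrier_mat m m" "u \<in> carrier_vec m" "v \<in> carrier_vec m"
  shows "hform u A v = (\<Sum>i<m. \<Sum>j<m. cnj (u $ i) * A $$ (i,j) * v $ j)"
  using assms unfolding hform_def scalar_prod_def
  by (simp add: lessThan_atLeast0 sum_distrib_left mult.assoc scalar_prod_def)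

lemma hform_XX: fixes X :: "complex mat"
  assumes "X \<in> carrier_mat m r" "v \<in> carrier_vec m"
  shows "hform v (X * mat_adjoint X) v = complex_of_real (vnorm2 (mat_adjoint X *\<^sub>v v))"
proof -
  have "hform v (X * mat_adjoint X) v = conjugate v \<bullet> (X *\<^sub>v (mat_adjoint X *\<^sub>v v))"
    unfolding hform_def using assms by (simp add: assoc_mult_mat_vec[of X m r "mat_adjoint X" m v])
  also have "\<dots> = conjugate (mat_adjoint X *\<^sub>v v) \<bullet> (mat_adjoint X *\<^sub>v v)"
  proof -
    have c: "mat_adjoint X *\<^sub>v v \<in> carrier_vec r" using assms by (metis adj_carrier mult_mat_vec_carrier)
    have a: "mat_adjoint X \<in> carrier_mat r m" using assms by simp
    show ?thesis using adj_sprod[OF a assms(2) c] by simp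
  qed
  finally show ?thesis by (simp add: conj_sprod_self)
qed

lemma sum_upd: fixes F :: "nat \<Rightarrow> complex" assumes "n < N"
  shows "(\<Sum>k<N. complex_of_real (if k = n then a n + d else a k) * F k)
       = (\<Sum>k<N. complex_of_real (a k) * F k) + complex_of_real d * F n"
proof -
  have "(\<Sum>k<N. complex_of_real (if k = n then a n + d else a k) * F k)
     = (\<Sum>k<N. complex_of_real (a k) * F k + (if k = n then complex_of_real d * F n else 0))"
    by (intro sum.cong) (auto simp: distrib_right)
  also have "\<dots> = (\<Sum>k<N. complex_of_real (a k) * F k) + complex_of_real d * F n"
    using assms by (simp add: sum.distrib)
  finally show ?thesis .
qed

lemma aux1: fixes u w e :: complex and c B :: "nat \<Rightarrow> complex"
  shows "cnj u * ((\<Sum>k<N. c k * B k) + e) * w = (\<Sum>k<N. c k * (cnj u * B k * w)) + cnj u * e * w"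
proof -
  have "cnj u * ((\<Sum>k<N. c k * B k) + e) * w = cnj u * (\<Sum>k<N. c k * B k) * w + cnj u * e * w"
    by (simp add: distrib_left distrib_right)
  also have "cnj u * (\<Sum>k<N. c k * B k) * w = (\<Sum>k<N. cnj u * (c k * B k) * w)"
    by (simp add: sum_distrib_left sum_distrib_right)
  also have "\<dots> = (\<Sum>k<N. c k * (cnj u * B k * w))"
    by (intro sum.cong refl) (simp add: mult_ac)
  finally show ?thesis .
qed

lemma aux2: fixes F :: "nat \<Rightarrow> nat \<Rightarrow> complex" and G :: "nat \<Rightarrow> complex"
  shows "(\<Sum>i<m. \<Sum>j<m. F i j + (if i = j then G i else 0)) = (\<Sum>i<m. \<Sum>j<m. F i j) + (\<Sum>i<m. G i)"
  by (simp add: sum.distrib)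

lemma aux3: fixes F :: "nat \<Rightarrow> nat \<Rightarrow> nat \<Rightarrow> complex"
  shows "(\<Sum>i<m. \<Sum>j<m. \<Sum>k<N. F i j k) = (\<Sum>k<N. \<Sum>i<m. \<Sum>j<m. F i j k)"
proof -
  have "(\<Sum>i<m. \<Sum>j<m. \<Sum>k<N. F i j k) = (\<Sum>i<m. \<Sum>k<N. \<Sum>j<m. F i j k)"
    by (rule sum.cong[OF refl], rule sum.swap)
  also have "\<dots> = (\<Sum>k<N. \<Sum>i<m. \<Sum>j<m. F i j k)" by (rule sum.swap)
  finally show ?thesis .
qed

locale prb =
  fixes N L M :: nat and sw2 :: real
    and s hb :: "nat \<Rightarrow> complex vec" and R Rh :: "nat \<Rightarrow> complex mat" and y :: "complex vec"
  assumes L: "L > 0" and M: "M > 0" and sw2: "sw2 > 0"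
    and s: "\<And>n. n < N \<Longrightarrow> s n \<in> carrier_vec L"
    and hb: "\<And>n. n < N \<Longrightarrow> hb n \<in> carrier_vec M"
    and Rh: "\<And>n. n < N \<Longrightarrow> Rh n \<in> carrier_mat M (dim_col (Rh n))"
    and RR: "\<And>n. n < N \<Longrightarrow> Rh n * mat_adjoint (Rh n) = R n"
    and y: "y \<in> carrier_vec (M*L)"
begin

abbreviation "m \<equiv> M * L"
definition "Bn k = kron (R k) (outer (s k))"
abbreviation "X k \<equiv> Xm L s Rh k"
abbreviation "S a \<equiv> Sig N L M s R sw2 a"
abbreviation "r a \<equiv> resid N L M s hb y a"
abbreviation "b k \<equiv> bvec s hb k"
abbreviation "rk k \<equiv> dim_col (Rh k)"

lemma Rh_row: "k < N \<Longrightarrow> dim_row (Rh k) = M"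
  using Rh[of k] by (rule carrier_matD(1))

lemma X_carrier: assumes k: "k < N" shows "X k \<in> carrier_mat m (rk k)"
proof -
  have "dim_row (Rh k) = M" by (rule Rh_row[OF k])
  thus ?thesis unfolding Xm_def kron_def carrier_mat_def by simp
qed

lemma R_carrier: "k < N \<Longrightarrow> R k \<in> carrier_mat M M"
  using RR[of k] Rh[of k] by (metis adj_carrier mult_carrier_mat)

lemma Bn_XX: "k < N \<Longrightarrow> Bn k = X k * mat_adjoint (X k)"
  unfolding Bn_def Xm_def using kron_XX[OF Rh s L] RR by simp

lemma Bn_carrier: "k < N \<Longrightarrow> Bn k \<in> carrier_mat m m"
  using Bn_XX X_carrier by (metis adj_carrier mult_carrier_mat)

lemma Bn_herm: "k < N \<Longrightarrow> mat_adjoint (Bn k) = Bn k"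
  using Bn_XX[of k] X_carrier[of k] adj_mult[of "X k" m "rk k" "mat_adjoint (X k)" m] by simp

lemma S_carrier[simp]: "S a \<in> carrier_mat m m"
  unfolding Sig_def by simp

lemma S_dim[simp]: "dim_row (S a) = m" "dim_col (S a) = m"
  unfolding Sig_def by simp_all

lemma b_carrier[simp]: "k < N \<Longrightarrow> b k \<in> carrier_vec m"
  using hb[of k] s[of k] unfolding bvec_def kron_vec_def by (simp add: mult.commute)

lemma r_carrier[simp]: "r a \<in> carrier_vec m"
  unfolding resid_def ybar_def using y by simp

lemma b_dim[simp]: "k < N \<Longrightarrow> dim_vec (b k) = m"
  using b_carrier by simp

lemma r_dim[simp]: "dim_vec (r a) = m"
  using r_carrier by simp

lemma S_index: "i < m \<Longrightarrow> j < m \<Longrightarrow> S a $$ (i,j) =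
   (\<Sum>k<N. complex_of_real (a k) * Bn k $$ (i,j)) + (if i = j then complex_of_real sw2 else 0)"
  unfolding Sig_def Bn_def by simp

lemma S_upd: "n < N \<Longrightarrow> S (a(n := a n + d)) = S a + complex_of_real d \<cdot>\<^sub>m Bn n"
proof (rule eq_matI)
  fix i j assume n: "n < N" and ij: "i < dim_row (S a + complex_of_real d \<cdot>\<^sub>m Bn n)" "j < dim_col (S a + complex_of_real d \<cdot>\<^sub>m Bn n)"
  then show "S (a(n := a n + d)) $$ (i,j) = (S a + complex_of_real d \<cdot>\<^sub>m Bn n) $$ (i,j)"
    using sum_upd[OF n, of a d "\<lambda>k. Bn k $$ (i,j)"] Bn_carrier[OF n] by (simp add: S_index)
qed (auto dest!: Bn_carrier)

lemma r_upd: assumes n: "n < N" shows "r (a(n := a n + d)) = r a - complex_of_real d \<cdot>\<^sub>v b n"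
proof (rule eq_vecI)
  fix i assume "i < dim_vec (r a - complex_of_real d \<cdot>\<^sub>v b n)"
  hence i: "i < m" using n by simp
  show "r (a(n := a n + d)) $ i = (r a - complex_of_real d \<cdot>\<^sub>v b n) $ i"
    using sum_upd[OF n, of a d "\<lambda>k. b k $ i"] i y n by (simp add: resid_def ybar_def)
qed (use n in simp)

lemma S_herm: "mat_adjoint (S a) = S a"
proof (rule eq_matI)
  fix i j assume "i < dim_row (S a)" "j < dim_col (S a)"
  hence ij: "i < m" "j < m" by auto
  have "\<And>k. k < N \<Longrightarrow> cnj (Bn k $$ (j,i)) = Bn k $$ (i,j)"
  proof -
    fix k assume k: "k < N"
    have "Bn k $$ (i,j) = mat_adjoint (Bn k) $$ (i,j)" using Bn_herm[OF k] by simp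
    also have "\<dots> = cnj (Bn k $$ (j,i))" using Bn_carrier[OF k] ij by simp
    finally show "cnj (Bn k $$ (j,i)) = Bn k $$ (i,j)" by simp
  qed
  thus "mat_adjoint (S a) $$ (i,j) = S a $$ (i,j)"
    using ij by (simp add: S_index)
qed auto

lemma S_hform: assumes v: "v \<in> carrier_vec m"
  shows "hform v (S a) v = (\<Sum>k<N. complex_of_real (a k) * hform v (Bn k) v) + complex_of_real sw2 * complex_of_real (vnorm2 v)"
proof -
  have "hform v (S a) v = (\<Sum>i<m. \<Sum>j<m. cnj (v $ i) * S a $$ (i,j) * v $ j)"
    by (rule hform_sum[OF S_carrier v v])
  also have "\<dots> = (\<Sum>i<m. \<Sum>j<m. (\<Sum>k<N. complex_of_real (a k) * (cnj (v $ i) * Bn k $$ (i,j) * v $ j))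
      + (if i = j then complex_of_real sw2 * (cnj (v $ i) * v $ i) else 0))"
  proof (intro sum.cong refl)
    fix i j assume "i \<in> {..<m}" "j \<in> {..<m}"
    hence ij: "i < m" "j < m" by auto
    show "cnj (v $ i) * S a $$ (i,j) * v $ j = (\<Sum>k<N. complex_of_real (a k) * (cnj (v $ i) * Bn k $$ (i,j) * v $ j))
      + (if i = j then complex_of_real sw2 * (cnj (v $ i) * v $ i) else 0)"
      unfolding S_index[OF ij] aux1 by (cases "i = j") (simp_all add: mult_ac)
  qed
  also have "\<dots> = (\<Sum>i<m. \<Sum>j<m. \<Sum>k<N. complex_of_real (a k) * (cnj (v $ i) * Bn k $$ (i,j) * v $ j))
      + (\<Sum>i<m. complex_of_real sw2 * (cnj (v $ i) * v $ i))"
    by (rule aux2)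
  also have "(\<Sum>i<m. complex_of_real sw2 * (cnj (v $ i) * v $ i)) = complex_of_real sw2 * (\<Sum>i<m. cnj (v $ i) * v $ i)"
    by (simp add: sum_distrib_left)
  also have "(\<Sum>i<m. \<Sum>j<m. \<Sum>k<N. complex_of_real (a k) * (cnj (v $ i) * Bn k $$ (i,j) * v $ j))
     = (\<Sum>k<N. \<Sum>i<m. \<Sum>j<m. complex_of_real (a k) * (cnj (v $ i) * Bn k $$ (i,j) * v $ j))"
    by (rule aux3)
  also have "\<dots> = (\<Sum>k<N. complex_of_real (a k) * hform v (Bn k) v)"
  proof (intro sum.cong refl)
    fix k assume "k \<in> {..<N}"
    hence k: "k < N" by simp
    show "(\<Sum>i<m. \<Sum>j<m. complex_of_real (a k) * (cnj (v $ i) * Bn k $$ (i,j) * v $ j))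
        = complex_of_real (a k) * hform v (Bn k) v"
      unfolding hform_sum[OF Bn_carrier[OF k] v v] sum_distrib_left by (simp add: mult.assoc)
  qed
  also have "(\<Sum>i<m. cnj (v $ i) * v $ i) = complex_of_real (vnorm2 v)"
    using conj_sprod_self[of v] v unfolding scalar_prod_def lessThan_atLeast0 by simp
  finally show ?thesis .
qed

lemma S_coercive: assumes a: "\<And>k. k < N \<Longrightarrow> 0 \<le> a k" and v: "v \<in> carrier_vec m"
  shows "sw2 * vnorm2 v \<le> Re (hform v (S a) v)"
proof -
  have "Re (hform v (S a) v) = (\<Sum>k<N. a k * vnorm2 (mat_adjoint (X k) *\<^sub>v v)) + sw2 * vnorm2 v"
    unfolding S_hform[OF v]
    by (simp add: Bn_XX hform_XX[OF X_carrier v])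
  moreover have "0 \<le> (\<Sum>k<N. a k * vnorm2 (mat_adjoint (X k) *\<^sub>v v))"
    by (intro sum_nonneg mult_nonneg_nonneg a vnorm2_nonneg) auto
  ultimately show ?thesis by simp
qed

end

definition coercive :: "real \<Rightarrow> nat \<Rightarrow> complex mat \<Rightarrow> bool" where
  "coercive \<sigma> n A \<longleftrightarrow> A \<in> carrier_mat n n \<and> (\<forall>v \<in> carrier_vec n. \<sigma> * vnorm2 v \<le> Re (hform v A v))"

lemma vnorm2_zero: assumes "v \<in> carrier_vec n" "vnorm2 v = 0" shows "v = 0\<^sub>v n"
proof (rule eq_vecI)
  fix i assume "i < dim_vec (0\<^sub>v n)"
  hence i: "i < n" by simp
  have "(cmod (v $ i))^2 \<le> vnorm2 v" using vnorm2_entry[of i v] assms i by simp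
  thus "v $ i = 0\<^sub>v n $ i" using assms i by simp
qed (use assms in simp)

lemma coercive_det: assumes c: "coercive \<sigma> n A" and s: "\<sigma> > 0" shows "det A \<noteq> 0"
proof
  assume "det A = 0"
  have A: "A \<in> carrier_mat n n" using c unfolding coercive_def by simp
  obtain v where v: "v \<in> carrier_vec n" "v \<noteq> 0\<^sub>v n" "A *\<^sub>v v = 0\<^sub>v n"
    using \<open>det A = 0\<close> det_0_iff_vec_prod_zero[OF A] by blast
  have "hform v A v = 0" unfolding hform_def using v by simp
  hence "\<sigma> * vnorm2 v \<le> 0" using c v unfolding coercive_def by force
  hence "vnorm2 v = 0" using s vnorm2_nonneg[of v] by (simp add: mult_le_0_iff)
  thus False using vnorm2_zero[OF v(1)] v(2) by simp
qed

lemma coercive_inv: assumes c: "coercive \<sigma> n A" and s: "\<sigma> > 0"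
  shows "minv A \<in> carrier_mat n n" "A * minv A = 1\<^sub>m n" "minv A * A = 1\<^sub>m n"
proof -
  have A: "A \<in> carrier_mat n n" using c unfolding coercive_def by simp
  have u: "A \<in> Units (ring_mat TYPE(complex) n ())"
    by (rule det_non_zero_imp_unit[OF A coercive_det[OF c s]])
  have "mat_inverse A \<noteq> None" using mat_inverse(1)[OF A, of "()"] u by blast
  then obtain B where B: "mat_inverse A = Some B" by blast
  from mat_inverse(2)[OF A B] have "A * B = 1\<^sub>m n \<and> B * A = 1\<^sub>m n \<and> B \<in> carrier_mat n n" .
  moreover have "minv A = B" unfolding minv_def B by simp
  ultimately show "minv A \<in> carrier_mat n n" "A * minv A = 1\<^sub>m n" "minv A * A = 1\<^sub>m n" by auto
qed

lemma inv_apply: assumes c: "coercive \<sigma> n A" and s: "\<sigma> > 0" and w: "w \<in> carrier_vec n"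
  shows "A *\<^sub>v (minv A *\<^sub>v w) = w" "minv A *\<^sub>v (A *\<^sub>v w) = w"
proof -
  have A: "A \<in> carrier_mat n n" using c unfolding coercive_def by simp
  note I = coercive_inv[OF c s]
  show "A *\<^sub>v (minv A *\<^sub>v w) = w"
    using assoc_mult_mat_vec[OF A I(1) w, symmetric] I(2) w by simp
  show "minv A *\<^sub>v (A *\<^sub>v w) = w"
    using assoc_mult_mat_vec[OF I(1) A w, symmetric] I(3) w by simp
qed

lemma inv_bound: assumes c: "coercive \<sigma> n A" and s: "\<sigma> > 0" and w: "w \<in> carrier_vec n"
  shows "\<sigma>^2 * vnorm2 (minv A *\<^sub>v w) \<le> vnorm2 w"
proof -
  have A: "A \<in> carrier_mat n n" using c unfolding coercive_def by simp
  define z where "z = minv A *\<^sub>v w"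
  have z: "z \<in> carrier_vec n" unfolding z_def using coercive_inv(1)[OF c s] w by simp
  have Az: "A *\<^sub>v z = w" unfolding z_def by (rule inv_apply(1)[OF c s w])
  have "\<sigma> * vnorm2 z \<le> Re (hform z A z)" using c z unfolding coercive_def by simp
  also have "hform z A z = conjugate z \<bullet> w" unfolding hform_def Az ..
  finally have 1: "\<sigma> * vnorm2 z \<le> Re (conjugate z \<bullet> w)" .
  have 2: "Re (conjugate z \<bullet> w) \<le> cmod (conjugate z \<bullet> w)" by (rule complex_Re_le_cmod)
  have 3: "(cmod (conjugate z \<bullet> w))^2 \<le> vnorm2 z * vnorm2 w" by (rule cs_vec[OF z w])
  have Z: "0 \<le> vnorm2 z" by (rule vnorm2_nonneg)
  have "(\<sigma> * vnorm2 z)^2 \<le> (cmod (conjugate z \<bullet> w))^2"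
    using 1 2 s Z by (intro power_mono) auto
  hence "\<sigma>^2 * vnorm2 z * vnorm2 z \<le> vnorm2 z * vnorm2 w" using 3 by (simp add: power2_eq_square mult_ac)
  hence "\<sigma>^2 * vnorm2 z \<le> vnorm2 w \<or> vnorm2 z = 0" using Z
    by (metis mult.commute mult_le_cancel_left_pos order_le_less)
  thus ?thesis unfolding z_def[symmetric] using vnorm2_nonneg[of w] by auto
qed

lemma inv_herm: assumes c: "coercive \<sigma> n A" and s: "\<sigma> > 0" and h: "mat_adjoint A = A"
  shows "mat_adjoint (minv A) = minv A"
proof -
  have A: "A \<in> carrier_mat n n" using c unfolding coercive_def by simp
  note I = coercive_inv[OF c s]
  let ?P = "minv A"
  have Pa: "mat_adjoint ?P \<in> carrier_mat n n" using I(1) by simp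
  have "mat_adjoint ?P = mat_adjoint ?P * (A * ?P)" using I(2) right_mult_one_mat[OF Pa] by simp
  also have "\<dots> = (mat_adjoint ?P * A) * ?P" using assoc_mult_mat[OF Pa A I(1)] by simp
  also have "mat_adjoint ?P * A = mat_adjoint (A * ?P)"
    using adj_mult[OF A I(1)] h by simp
  also have "\<dots> = 1\<^sub>m n" using I(2) by simp
  finally show ?thesis using I(1) by simp
qed

lemma hform_add: fixes A B :: "complex mat"
  assumes "A \<in> carrier_mat n n" "B \<in> carrier_mat n n" "u \<in> carrier_vec n" "v \<in> carrier_vec n"
  shows "hform u (A + B) v = hform u A v + hform u B v"
  using assms unfolding hform_def by (simp add: add_mult_distrib_mat_vec scalar_prod_add_distrib[of _ n])

lemma hform_smult: fixes A :: "complex mat"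
  assumes "A \<in> carrier_mat n n" "u \<in> carrier_vec n" "v \<in> carrier_vec n"
  shows "hform u (c \<cdot>\<^sub>m A) v = c * hform u A v"
proof -
  have "c \<cdot>\<^sub>m A \<in> carrier_mat n n" using assms by simp
  thus ?thesis using assms unfolding hform_sum[OF assms] hform_sum[OF \<open>c \<cdot>\<^sub>m A \<in> carrier_mat n n\<close> assms(2,3)]
    by (simp add: sum_distrib_left mult_ac)
qed

lemma hform_one:
  assumes "u \<in> carrier_vec n" "v \<in> carrier_vec n"
  shows "hform u (1\<^sub>m n) v = conjugate u \<bullet> v"
  using assms unfolding hform_def by simp

lemma det_herm_real: fixes A :: "complex mat"
  assumes A: "A \<in> carrier_mat n n" and h: "mat_adjoint A = A"
  shows "cnj (det A) = det A"
proof -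
  have e: "\<And>i j. i < n \<Longrightarrow> j < n \<Longrightarrow> cnj (A $$ (i,j)) = A $$ (j,i)"
  proof -
    fix i j assume "i < n" "j < n"
    hence "mat_adjoint A $$ (j,i) = cnj (A $$ (i,j))" using A by simp
    thus "cnj (A $$ (i,j)) = A $$ (j,i)" using h by simp
  qed
  have "cnj (det A) = (\<Sum>p\<in>{p. p permutes {0..<n}}. signof p * (\<Prod>i=0..<n. cnj (A $$ (i, p i))))"
    unfolding det_def'[OF A] by (simp add: cnj_sum cnj_prod)
  also have "\<dots> = (\<Sum>p\<in>{p. p permutes {0..<n}}. signof p * (\<Prod>i=0..<n. transpose_mat A $$ (i, p i)))"
  proof (intro sum.cong refl arg_cong2[where f = "(*)"] prod.cong)
    fix p i assume p: "p \<in> {p. p permutes {0..<n}}" and i: "i \<in> {0..<n}"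
    have "p i < n" using p i by (auto dest: permutes_in_image)
    thus "cnj (A $$ (i, p i)) = transpose_mat A $$ (i, p i)" using e[of i "p i"] i A by auto
  qed
  also have "\<dots> = det (transpose_mat A)" using A by (simp add: det_def'[of _ n])
  also have "\<dots> = det A" by (rule det_transpose[OF A])
  finally show ?thesis .
qed


lemma det_pos: fixes A :: "complex mat"
  assumes c: "coercive \<sigma> n A" and s: "\<sigma> > 0" and h: "mat_adjoint A = A"
  shows "Re (det A) > 0" "Im (det A) = 0"
proof -
  have A: "A \<in> carrier_mat n n" using c unfolding coercive_def by simp
  define H where "H t = complex_of_real ((1 - t) * \<sigma>) \<cdot>\<^sub>m 1\<^sub>m n + complex_of_real t \<cdot>\<^sub>m A" for t :: real
  have Hc: "H t \<in> carrier_mat n n" for t unfolding H_def using A by simp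
  have Hi: "H t $$ (i,j) = complex_of_real ((1 - t) * \<sigma>) * (if i = j then 1 else 0) + complex_of_real t * A $$ (i,j)"
    if "i < n" "j < n" for t i j unfolding H_def using A that by simp
  have Hcoer: "coercive \<sigma> n (H t)" if t: "0 \<le> t" "t \<le> 1" for t
    unfolding coercive_def
  proof (intro conjI ballI Hc)
    fix v :: "complex vec" assume v: "v \<in> carrier_vec n"
    have "hform v (H t) v = complex_of_real ((1 - t) * \<sigma>) * complex_of_real (vnorm2 v) + complex_of_real t * hform v A v"
    proof -
      have c1: "complex_of_real ((1 - t) * \<sigma>) \<cdot>\<^sub>m 1\<^sub>m n \<in> carrier_mat n n" by simp
      have c2: "complex_of_real t \<cdot>\<^sub>m A \<in> carrier_mat n n" using A by simp
      show ?thesis unfolding H_def hform_add[OF c1 c2 v v] hform_smult[OF one_carrier_mat v v] hform_smult[OF A v v]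
        hform_one[OF v v] conj_sprod_self ..
    qed
    hence "Re (hform v (H t) v) = (1 - t) * \<sigma> * vnorm2 v + t * Re (hform v A v)" by simp
    moreover have "\<sigma> * vnorm2 v \<le> Re (hform v A v)" using c v unfolding coercive_def by simp
    moreover have "t * (\<sigma> * vnorm2 v) \<le> t * Re (hform v A v)"
      using calculation(2) t by (intro mult_left_mono) auto
    moreover have "(1 - t) * \<sigma> * vnorm2 v = \<sigma> * vnorm2 v - t * (\<sigma> * vnorm2 v)"
      by (simp add: algebra_simps)
    ultimately show "\<sigma> * vnorm2 v \<le> Re (hform v (H t) v)" by linarith
  qed
  have Hherm: "mat_adjoint (H t) = H t" for t
  proof (rule eq_matI)
    fix i j assume "i < dim_row (H t)" "j < dim_col (H t)"
    hence ij: "i < n" "j < n" using Hc[of t] by auto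
    have "cnj (A $$ (j,i)) = A $$ (i,j)"
    proof -
      have "mat_adjoint A $$ (i,j) = cnj (A $$ (j,i))" using A ij by simp
      thus ?thesis using h by simp
    qed
    thus "mat_adjoint (H t) $$ (i,j) = H t $$ (i,j)" using Hc[of t] ij by (simp add: Hi)
  qed (use Hc[of t] in auto)
  define g where "g t = (\<Sum>p\<in>{p. p permutes {0..<n}}. signof p *
     (\<Prod>i=0..<n. complex_of_real ((1 - t) * \<sigma>) * (if i = p i then 1 else 0) + complex_of_real t * A $$ (i, p i)))" for t
  have dg: "det (H t) = g t" for t
    unfolding det_def'[OF Hc] g_def
  proof (intro sum.cong refl arg_cong2[where f = "(*)"] prod.cong)
    fix p i assume p: "p \<in> {p. p permutes {0..<n}}" and i: "i \<in> {0..<n}"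
    have "p i < n" using p i by (auto dest: permutes_in_image)
    thus "H t $$ (i, p i) = complex_of_real ((1 - t) * \<sigma>) * (if i = p i then 1 else 0) + complex_of_real t * A $$ (i, p i)"
      using Hi i by simp
  qed
  have cont: "continuous_on {0..1} (\<lambda>t. Re (g t))"
    unfolding g_def by (intro continuous_intros)
  have real: "Im (det (H t)) = 0" for t
    using det_herm_real[OF Hc Hherm, of t] by (metis cnj.simps(2) neg_equal_zero)
  have H0: "H 0 = complex_of_real \<sigma> \<cdot>\<^sub>m 1\<^sub>m n" unfolding H_def using A by (intro eq_matI) auto
  have H1: "H 1 = A" unfolding H_def using A by (intro eq_matI) auto
  have "Re (g 0) = \<sigma> ^ n" unfolding dg[symmetric] H0 by simp
  hence g0: "Re (g 0) > 0" using s by simp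
  show "Re (det A) > 0"
  proof (rule ccontr)
    assume "\<not> Re (det A) > 0"
    hence "Re (g 1) \<le> 0" using H1 dg[of 1] by simp
    then obtain t where t: "t \<in> {0..1}" "Re (g t) = 0"
      using IVT2'[of "\<lambda>t. Re (g t)" 1 0 0] g0 cont by force
    have "det (H t) = 0" using t(2) real[of t] dg[of t] by (simp add: complex_eq_iff)
    thus False using coercive_det[OF Hcoer s] t(1) by auto
  qed
  show "Im (det A) = 0" using real[of 1] H1 by simp
qed


lemma prod_one_bound1:
  fixes c :: "nat \<Rightarrow> complex" and d \<gamma> :: real
  assumes fin: "finite I" and cb: "\<And>i. cmod (c i) \<le> \<gamma>" and d1: "\<bar>d\<bar> \<le> 1" and g0: "0 \<le> \<gamma>"
  shows "cmod (\<Prod>i\<in>I. 1 + complex_of_real d * c i) \<le> (1 + \<gamma>) ^ card I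
    \<and> cmod ((\<Prod>i\<in>I. 1 + complex_of_real d * c i) - 1) \<le> \<bar>d\<bar> * card I * (1 + \<gamma>) ^ card I
    \<and> cmod ((\<Prod>i\<in>I. 1 + complex_of_real d * c i) - 1 - complex_of_real d * (\<Sum>i\<in>I. c i))
          \<le> d^2 * \<gamma> * (card I)^2 * (1 + \<gamma>) ^ card I"
  using fin
proof (induction I rule: finite_induct)
  case empty
  show ?case by simp
next
  case (insert j F)
  let ?P = "\<Prod>i\<in>F. 1 + complex_of_real d * c i"
  let ?S = "\<Sum>i\<in>F. c i"
  let ?k = "real (card F)"
  have cj: "cmod (c j) \<le> \<gamma>" using cb by simp
  have IH1: "cmod ?P \<le> (1 + \<gamma>) ^ card F" using insert(3) by simp
  have IH2: "cmod (?P - 1) \<le> \<bar>d\<bar> * ?k * (1 + \<gamma>) ^ card F" using insert(3) by simp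
  have IH3: "cmod (?P - 1 - complex_of_real d * ?S) \<le> d^2 * \<gamma> * ?k^2 * (1 + \<gamma>) ^ card F" using insert(3) by simp
  have dc: "cmod (complex_of_real d * c j) \<le> \<bar>d\<bar> * \<gamma>"
    using cj by (simp add: norm_mult mult_left_mono)
  have dc1: "\<bar>d\<bar> * \<gamma> \<le> \<gamma>" using d1 g0 by (simp add: mult_left_le_one_le)
  have g1: "1 \<le> (1 + \<gamma>) ^ card F" using g0 by simp
  have card: "card (insert j F) = card F + 1" using insert by simp
  have Pi: "(\<Prod>i\<in>insert j F. 1 + complex_of_real d * c i) = (1 + complex_of_real d * c j) * ?P"
    using insert by simp
  have Si: "(\<Sum>i\<in>insert j F. c i) = c j + ?S" using insert by simp
  have C1: "cmod (\<Prod>i\<in>insert j F. 1 + complex_of_real d * c i) \<le> (1 + \<gamma>) ^ card (insert j F)"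
  proof -
    have "cmod ((1 + complex_of_real d * c j) * ?P) \<le> (1 + \<gamma>) * (1 + \<gamma>) ^ card F"
      unfolding norm_mult
    proof (rule mult_mono)
      show "cmod (1 + complex_of_real d * c j) \<le> 1 + \<gamma>"
        using norm_triangle_ineq[of 1 "complex_of_real d * c j"] dc dc1 by simp
    qed (use IH1 g0 in auto)
    thus ?thesis unfolding Pi card by simp
  qed
  have C2: "cmod ((\<Prod>i\<in>insert j F. 1 + complex_of_real d * c i) - 1) \<le> \<bar>d\<bar> * card (insert j F) * (1 + \<gamma>) ^ card (insert j F)"
  proof -
    have "(1 + complex_of_real d * c j) * ?P - 1 = (?P - 1) + complex_of_real d * c j * ?P"
      by (simp add: algebra_simps)
    hence "cmod ((1 + complex_of_real d * c j) * ?P - 1) \<le> cmod (?P - 1) + cmod (complex_of_real d * c j) * cmod ?P"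
      by (metis norm_mult norm_triangle_ineq)
    also have "\<dots> \<le> \<bar>d\<bar> * ?k * (1 + \<gamma>) ^ card F + (\<bar>d\<bar> * \<gamma>) * (1 + \<gamma>) ^ card F"
      by (intro add_mono IH2 mult_mono dc IH1) (use g0 in auto)
    also have "\<dots> \<le> \<bar>d\<bar> * (?k + 1) * (1 + \<gamma>) ^ (card F + 1)"
    proof -
      have a: "0 \<le> \<bar>d\<bar> * (1 + \<gamma>) ^ card F" using g0 by simp
      have "\<bar>d\<bar> * ?k * (1 + \<gamma>) ^ card F + (\<bar>d\<bar> * \<gamma>) * (1 + \<gamma>) ^ card F
           = (\<bar>d\<bar> * (1 + \<gamma>) ^ card F) * (?k + \<gamma>)" by (simp add: algebra_simps)
      also have "\<dots> \<le> (\<bar>d\<bar> * (1 + \<gamma>) ^ card F) * ((?k + 1) * (1 + \<gamma>))"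
      proof (intro mult_left_mono a)
        have e: "(?k + 1) * (1 + \<gamma>) = ?k + ?k * \<gamma> + 1 + \<gamma>" by (simp add: algebra_simps)
        have "0 \<le> ?k * \<gamma>" using g0 by simp
        thus "?k + \<gamma> \<le> (?k + 1) * (1 + \<gamma>)" unfolding e by linarith
      qed
      also have "\<dots> = \<bar>d\<bar> * (?k + 1) * (1 + \<gamma>) ^ (card F + 1)" by (simp add: algebra_simps)
      finally show ?thesis .
    qed
    finally show ?thesis unfolding Pi card by (simp add: add.commute)
  qed
  have C3: "cmod ((\<Prod>i\<in>insert j F. 1 + complex_of_real d * c i) - 1 - complex_of_real d * (\<Sum>i\<in>insert j F. c i))
          \<le> d^2 * \<gamma> * (card (insert j F))^2 * (1 + \<gamma>) ^ card (insert j F)"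
  proof -
    have "(1 + complex_of_real d * c j) * ?P - 1 - complex_of_real d * (c j + ?S)
        = (?P - 1 - complex_of_real d * ?S) + complex_of_real d * c j * (?P - 1)"
      by (simp add: algebra_simps)
    hence "cmod ((1 + complex_of_real d * c j) * ?P - 1 - complex_of_real d * (c j + ?S))
        \<le> cmod (?P - 1 - complex_of_real d * ?S) + cmod (complex_of_real d * c j) * cmod (?P - 1)"
      by (metis norm_mult norm_triangle_ineq)
    also have "\<dots> \<le> d^2 * \<gamma> * ?k^2 * (1 + \<gamma>) ^ card F + (\<bar>d\<bar> * \<gamma>) * (\<bar>d\<bar> * ?k * (1 + \<gamma>) ^ card F)"
      by (intro add_mono IH3 mult_mono dc IH2) (use g0 in auto)
    also have "\<dots> \<le> d^2 * \<gamma> * (?k + 1)^2 * (1 + \<gamma>) ^ (card F + 1)"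
    proof -
      have a: "0 \<le> d^2 * \<gamma> * (1 + \<gamma>) ^ card F" using g0 by simp
      have "d^2 * \<gamma> * ?k^2 * (1 + \<gamma>) ^ card F + (\<bar>d\<bar> * \<gamma>) * (\<bar>d\<bar> * ?k * (1 + \<gamma>) ^ card F)
           = (d^2 * \<gamma> * (1 + \<gamma>) ^ card F) * (?k^2 + ?k)"
        by (simp add: algebra_simps power2_eq_square abs_mult_self_eq)
      also have "\<dots> \<le> (d^2 * \<gamma> * (1 + \<gamma>) ^ card F) * ((?k + 1)^2 * (1 + \<gamma>))"
      proof (intro mult_left_mono a)
        have "?k^2 + ?k \<le> (?k + 1)^2" by (simp add: power2_eq_square algebra_simps)
        also have "\<dots> \<le> (?k + 1)^2 * (1 + \<gamma>)" using g0 by (simp add: algebra_simps)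
        finally show "?k^2 + ?k \<le> (?k + 1)^2 * (1 + \<gamma>)" .
      qed
      also have "\<dots> = d^2 * \<gamma> * (?k + 1)^2 * (1 + \<gamma>) ^ (card F + 1)" by (simp add: algebra_simps)
      finally show ?thesis .
    qed
    finally show ?thesis unfolding Pi Si card by (simp add: add.commute)
  qed
  show ?case using C1 C2 C3 by blast
qed

lemma nonid_bound:
  fixes E :: "complex mat" and d \<gamma> :: real
  assumes p: "p permutes {0..<n}" and pid: "p \<noteq> id" and g0: "0 \<le> \<gamma>" and d1: "\<bar>d\<bar> \<le> 1"
    and E1: "\<And>i. i < n \<Longrightarrow> cmod (E $$ (i, p i)) \<le> 1 + \<gamma>"
    and E2: "\<And>i. i < n \<Longrightarrow> p i \<noteq> i \<Longrightarrow> cmod (E $$ (i, p i)) \<le> \<bar>d\<bar> * \<gamma>"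
  shows "cmod (\<Prod>i=0..<n. E $$ (i, p i)) \<le> d^2 * \<gamma>^2 * (1 + \<gamma>) ^ n"
proof -
  obtain i1 where i1: "p i1 \<noteq> i1" using pid by (metis eq_id_iff)
  have i1n: "i1 < n" using p i1 unfolding permutes_def by auto
  define i2 where "i2 = p i1"
  have i2n: "i2 < n" unfolding i2_def using p i1n by (auto dest: permutes_in_image)
  have i2: "p i2 \<noteq> i2"
  proof
    assume "p i2 = i2"
    hence "p i2 = p i1" unfolding i2_def by simp
    hence "i2 = i1" using permutes_inj[OF p] by (auto dest: injD)
    thus False using i1 unfolding i2_def by simp
  qed
  have ne: "i1 \<noteq> i2" using i1 unfolding i2_def by simp
  let ?f = "\<lambda>i. cmod (E $$ (i, p i))"
  let ?I = "{0..<n}"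
  have "cmod (\<Prod>i=0..<n. E $$ (i, p i)) = (\<Prod>i\<in>?I. ?f i)" by (simp add: prod_norm)
  also have "\<dots> = ?f i1 * (\<Prod>i\<in>?I - {i1}. ?f i)" using i1n by (simp add: prod.remove)
  also have "(\<Prod>i\<in>?I - {i1}. ?f i) = ?f i2 * (\<Prod>i\<in>?I - {i1} - {i2}. ?f i)"
    using i2n ne by (subst prod.remove[of _ i2]) auto
  also have "?f i1 * (?f i2 * (\<Prod>i\<in>?I - {i1} - {i2}. ?f i)) \<le> (\<bar>d\<bar> * \<gamma>) * ((\<bar>d\<bar> * \<gamma>) * (1 + \<gamma>) ^ n)"
  proof (intro mult_mono)
    show "?f i1 \<le> \<bar>d\<bar> * \<gamma>" using E2 i1n i1 by simp
    show "?f i2 \<le> \<bar>d\<bar> * \<gamma>" using E2 i2n i2 by simp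
    show "(\<Prod>i\<in>?I - {i1} - {i2}. ?f i) \<le> (1 + \<gamma>) ^ n"
    proof (rule prod_le_power)
      fix i assume "i \<in> ?I - {i1} - {i2}" then show "0 \<le> ?f i \<and> ?f i \<le> 1 + \<gamma>" using E1 by auto
    next
      show "card (?I - {i1} - {i2}) \<le> n" using card_mono[of ?I "?I - {i1} - {i2}"] by auto
    next
      show "1 \<le> 1 + \<gamma>" using g0 by simp
    qed
  qed (use g0 in \<open>auto intro!: mult_nonneg_nonneg prod_nonneg\<close>)
  also have "\<dots> = d^2 * \<gamma>^2 * (1 + \<gamma>) ^ n" by (simp add: power2_eq_square abs_mult_self_eq mult_ac)
  finally show ?thesis .
qed

lemma det_bound:
  fixes C :: "complex mat" and d \<gamma> :: real
  assumes C: "C \<in> carrier_mat n n" and cb: "\<And>i j. i < n \<Longrightarrow> j < n \<Longrightarrow> cmod (C $$ (i,j)) \<le> \<gamma>"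
    and g0: "0 \<le> \<gamma>" and d1: "\<bar>d\<bar> \<le> 1"
  shows "cmod (det (1\<^sub>m n + complex_of_real d \<cdot>\<^sub>m C) - 1 - complex_of_real d * (\<Sum>i<n. C $$ (i,i)))
     \<le> d^2 * (\<gamma> * n^2 * (1 + \<gamma>) ^ n + card {p. p permutes {0..<n}} * (\<gamma>^2 * (1 + \<gamma>) ^ n))"
proof -
  let ?E = "1\<^sub>m n + complex_of_real d \<cdot>\<^sub>m C"
  let ?P = "{p. p permutes {0..<n}}"
  have Ec: "?E \<in> carrier_mat n n" using C by simp
  have Ei: "?E $$ (i,j) = (if i = j then 1 else 0) + complex_of_real d * C $$ (i,j)" if "i < n" "j < n" for i j
    using C that by simp
  have finP: "finite ?P" by (simp add: finite_permutations)
  have idP: "id \<in> ?P" by (simp add: permutes_id)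
  define c where "c i = (if i < n then C $$ (i,i) else 0)" for i
  have cb': "cmod (c i) \<le> \<gamma>" for i using cb g0 unfolding c_def by auto
  have det: "det ?E = (\<Prod>i=0..<n. 1 + complex_of_real d * c i)
      + (\<Sum>p\<in>?P - {id}. signof p * (\<Prod>i=0..<n. ?E $$ (i, p i)))"
  proof -
    have "det ?E = (\<Sum>p\<in>?P. signof p * (\<Prod>i=0..<n. ?E $$ (i, p i)))" by (rule det_def'[OF Ec])
    also have "\<dots> = signof id * (\<Prod>i=0..<n. ?E $$ (i, id i)) + (\<Sum>p\<in>?P - {id}. signof p * (\<Prod>i=0..<n. ?E $$ (i, p i)))"
      by (rule sum.remove[OF finP idP])
    also have "(\<Prod>i=0..<n. ?E $$ (i, id i)) = (\<Prod>i=0..<n. 1 + complex_of_real d * c i)"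
      by (intro prod.cong refl) (simp add: Ei c_def)
    finally show ?thesis by (simp only: signof_id(1) mult_1)
  qed
  have trc: "(\<Sum>i<n. C $$ (i,i)) = (\<Sum>i\<in>{0..<n}. c i)" unfolding c_def by (simp add: lessThan_atLeast0)
  have b1: "cmod ((\<Prod>i=0..<n. 1 + complex_of_real d * c i) - 1 - complex_of_real d * (\<Sum>i\<in>{0..<n}. c i))
      \<le> d^2 * \<gamma> * n^2 * (1 + \<gamma>) ^ n"
    using prod_one_bound1[of "{0..<n}" c \<gamma> d] cb' d1 g0 by simp
  have b2: "cmod (\<Sum>p\<in>?P - {id}. signof p * (\<Prod>i=0..<n. ?E $$ (i, p i)))
      \<le> card ?P * (d^2 * \<gamma>^2 * (1 + \<gamma>) ^ n)"
  proof -
    have "cmod (\<Sum>p\<in>?P - {id}. signof p * (\<Prod>i=0..<n. ?E $$ (i, p i)))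
        \<le> (\<Sum>p\<in>?P - {id}. cmod (signof p * (\<Prod>i=0..<n. ?E $$ (i, p i))))" by (rule norm_sum)
    also have "\<dots> \<le> (\<Sum>p\<in>?P - {id}. d^2 * \<gamma>^2 * (1 + \<gamma>) ^ n)"
    proof (rule sum_mono)
      fix p assume p: "p \<in> ?P - {id}"
      have pp: "p permutes {0..<n}" using p by simp
      have pin: "i < n \<Longrightarrow> p i < n" for i using pp by (auto dest: permutes_in_image)
      have s1: "\<bar>real_of_int (sign p)\<bar> = 1" by (simp add: sign_def)
      have "cmod (\<Prod>i=0..<n. ?E $$ (i, p i)) \<le> d^2 * \<gamma>^2 * (1 + \<gamma>) ^ n"
      proof (rule nonid_bound[OF pp _ g0 d1])
        show "p \<noteq> id" using p by simp
        fix i assume i: "i < n"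
        have ce: "cmod (complex_of_real d * C $$ (i, p i)) \<le> \<bar>d\<bar> * \<gamma>"
          using cb[OF i pin[OF i]] by (simp add: norm_mult mult_left_mono)
        have dg: "\<bar>d\<bar> * \<gamma> \<le> \<gamma>" using d1 g0 by (simp add: mult_left_le_one_le)
        show "cmod (?E $$ (i, p i)) \<le> 1 + \<gamma>"
          unfolding Ei[OF i pin[OF i]]
          using norm_triangle_ineq[of "if i = p i then 1 else 0" "complex_of_real d * C $$ (i, p i)"] ce dg
          by (auto split: if_splits)
        assume "p i \<noteq> i"
        thus "cmod (?E $$ (i, p i)) \<le> \<bar>d\<bar> * \<gamma>" unfolding Ei[OF i pin[OF i]] using ce by simp
      qed
      thus "cmod (signof p * (\<Prod>i=0..<n. ?E $$ (i, p i))) \<le> d^2 * \<gamma>^2 * (1 + \<gamma>) ^ n"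
        by (simp add: norm_mult s1)
    qed
    also have "\<dots> = card (?P - {id}) * (d^2 * \<gamma>^2 * (1 + \<gamma>) ^ n)" by simp
    also have "\<dots> \<le> card ?P * (d^2 * \<gamma>^2 * (1 + \<gamma>) ^ n)"
      using g0 by (intro mult_right_mono) (auto simp: card_Diff_subset finP idP)
    finally show ?thesis .
  qed
  have "det ?E - 1 - complex_of_real d * (\<Sum>i<n. C $$ (i,i))
     = ((\<Prod>i=0..<n. 1 + complex_of_real d * c i) - 1 - complex_of_real d * (\<Sum>i\<in>{0..<n}. c i))
       + (\<Sum>p\<in>?P - {id}. signof p * (\<Prod>i=0..<n. ?E $$ (i, p i)))"
    unfolding det trc by simp
  hence "cmod (det ?E - 1 - complex_of_real d * (\<Sum>i<n. C $$ (i,i)))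
      \<le> d^2 * \<gamma> * n^2 * (1 + \<gamma>) ^ n + card ?P * (d^2 * \<gamma>^2 * (1 + \<gamma>) ^ n)"
    using b1 b2 norm_triangle_ineq by (smt (verit))
  thus ?thesis by (simp add: algebra_simps)
qed


lemma clip_prop:
  fixes lo hi t :: real
  assumes "lo \<le> 0" "0 \<le> hi"
  shows "(t - max lo (min hi t)) * max lo (min hi t) \<ge> 0"
  using assms by (cases "t \<le> lo"; cases "t \<le> hi") (auto simp: mult_nonneg_nonneg mult_nonpos_nonpos max_def min_def)

lemma clip_scale:
  fixes lo hi g L :: real
  assumes "lo \<le> 0" "0 \<le> hi" "L \<ge> 1"
  shows "\<bar>max lo (min hi (- g))\<bar> \<le> L * \<bar>max lo (min hi (- g / L))\<bar>"
proof (cases "g \<le> 0")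
  case True
  hence a: "0 \<le> - g" "0 \<le> - g / L" using assms by (auto intro: divide_nonpos_pos)
  have "\<bar>max lo (min hi (- g))\<bar> = min hi (- g)" using a assms by (simp add: max_def min_def)
  also have "\<dots> \<le> L * min hi (- g / L)"
  proof -
    have "L * min hi (- g / L) = min (L * hi) (- g)" using assms by (simp add: min_mult_distrib_left)
    moreover have "min hi (- g) \<le> min (L * hi) (- g)"
    proof -
      have "1 * hi \<le> L * hi" using assms by (intro mult_right_mono) auto
      thus ?thesis by (auto simp: min_def)
    qed
    ultimately show ?thesis by simp
  qed
  also have "\<dots> = L * \<bar>max lo (min hi (- g / L))\<bar>" using a assms by (simp add: max_def min_def)
  finally show ?thesis .
next
  case False
  hence a: "- g \<le> 0" "- g / L \<le> 0" using assms by (auto simp: divide_nonpos_pos)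
  have "\<bar>max lo (min hi (- g))\<bar> = - max lo (- g)" using a assms by (simp add: max_def min_def)
  also have "\<dots> \<le> L * (- max lo (- g / L))"
  proof -
    have "L * max lo (- g / L) = max (L * lo) (- g)" using assms by (simp add: max_mult_distrib_left)
    moreover have "max (L * lo) (- g) \<le> max lo (- g)"
    proof -
      have "L * lo \<le> 1 * lo" using assms by (intro mult_right_mono_neg) auto
      thus ?thesis by (auto simp: max_def)
    qed
    ultimately show ?thesis by simp
  qed
  also have "\<dots> = L * \<bar>max lo (min hi (- g / L))\<bar>"
  proof -
    have m2: "min hi (- g / L) = - g / L" using a(2) assms(2) by simp
    have "max lo (- g / L) \<le> 0" using a assms by simp
    thus ?thesis unfolding m2 by (simp add: abs_of_nonpos)
  qed
  finally show ?thesis .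
qed

lemma prox:
  fixes phi p :: "real \<Rightarrow> real" and f g K mu lo hi V c dbar :: real
  assumes lohi: "lo \<le> 0" "0 \<le> hi" and K: "0 \<le> K" and c: "c = 1 + 4 * K" and mu: "mu \<ge> c"
    and A: "phi dbar \<le> f + g * dbar + K * dbar^2"
    and B: "\<And>d. d \<in> {lo..hi} \<Longrightarrow> \<bar>p d - f - g * d\<bar> \<le> K * d^2"
    and db: "dbar \<in> {lo..hi}"
    and mn: "\<And>d. d \<in> {lo..hi} \<Longrightarrow> p dbar + mu / 2 * dbar^2 \<le> p d + mu / 2 * d^2"
    and V: "V = \<bar>max lo (min hi (- g))\<bar>"
  shows "phi dbar \<le> f - V^2 / (2 * (mu + c))"
proof -
  define L where "L = mu + 2 * K"
  have L1: "L \<ge> 1" unfolding L_def using mu c K by simp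
  have Lc: "L \<le> mu + c" unfolding L_def using c K by simp
  define ds where "ds = max lo (min hi (- g / L))"
  have ds: "ds \<in> {lo..hi}" unfolding ds_def using lohi by auto
  have "phi dbar \<le> p dbar + 2 * K * dbar^2" using A B[OF db] by (simp add: abs_le_iff)
  also have "\<dots> \<le> p dbar + mu / 2 * dbar^2"
    using mu c K by (intro add_left_mono mult_right_mono) auto
  also have "\<dots> \<le> p ds + mu / 2 * ds^2" by (rule mn[OF ds])
  also have "\<dots> \<le> f + g * ds + L / 2 * ds^2"
  proof -
    have "p ds \<le> f + g * ds + K * ds^2" using B[OF ds] by (simp add: abs_le_iff)
    moreover have "L / 2 * ds^2 = mu / 2 * ds^2 + K * ds^2" unfolding L_def by (simp add: field_simps)
    ultimately show ?thesis by linarith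
  qed
  also have "\<dots> \<le> f - L / 2 * ds^2"
  proof -
    have "(- g / L - ds) * ds \<ge> 0" unfolding ds_def by (rule clip_prop[OF lohi])
    hence "- g / L * ds \<ge> ds^2" by (simp add: algebra_simps power2_eq_square)
    hence "L * (- g / L * ds) \<ge> L * ds^2" using L1 by (intro mult_left_mono) auto
    hence "- g * ds \<ge> L * ds^2" using L1 by simp
    thus ?thesis by (simp add: algebra_simps)
  qed
  also have "\<dots> \<le> f - V^2 / (2 * (mu + c))"
  proof -
    have "V \<le> L * \<bar>ds\<bar>" unfolding V ds_def by (rule clip_scale[OF lohi L1])
    hence "V^2 \<le> (L * \<bar>ds\<bar>)^2" using V by (intro power_mono) auto
    hence "V^2 \<le> L^2 * ds^2" by (simp add: power_mult_distrib)
    hence "V^2 / (2 * L) \<le> L / 2 * ds^2" using L1 by (simp add: field_simps power2_eq_square)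
    moreover have "V^2 / (2 * (mu + c)) \<le> V^2 / (2 * L)"
      using L1 Lc by (intro divide_left_mono) auto
    ultimately show ?thesis by linarith
  qed
  finally show ?thesis .
qed


lemma smult_mat_vec: fixes A :: "complex mat"
  assumes "A \<in> carrier_mat n k" "v \<in> carrier_vec k"
  shows "(c \<cdot>\<^sub>m A) *\<^sub>v v = c \<cdot>\<^sub>v (A *\<^sub>v v)"
  by (rule eq_vecI) (use assms in \<open>auto simp: scalar_prod_def sum_distrib_left mult_ac\<close>)

lemma sp_minus_left: fixes x y z :: "complex vec"
  assumes "x \<in> carrier_vec n" "y \<in> carrier_vec n" "z \<in> carrier_vec n"
  shows "conjugate (x - y) \<bullet> z = conjugate x \<bullet> z - conjugate y \<bullet> z"
  using assms by (simp add: scalar_prod_def sum_subtractf algebra_simps)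

lemma sp_smult_left: fixes x z :: "complex vec"
  assumes "x \<in> carrier_vec n" "z \<in> carrier_vec n"
  shows "conjugate (complex_of_real d \<cdot>\<^sub>v x) \<bullet> z = complex_of_real d * (conjugate x \<bullet> z)"
  using assms by (simp add: scalar_prod_def sum_distrib_left mult_ac)

lemma sp_minus_right: fixes x y z :: "complex vec"
  assumes "x \<in> carrier_vec n" "y \<in> carrier_vec n" "z \<in> carrier_vec n"
  shows "conjugate x \<bullet> (y - z) = conjugate x \<bullet> y - conjugate x \<bullet> z"
  using assms by (simp add: scalar_prod_def sum_subtractf algebra_simps)

lemma sp_smult_right: fixes x z :: "complex vec"
  assumes "x \<in> carrier_vec n" "z \<in> carrier_vec n"
  shows "conjugate x \<bullet> (c \<cdot>\<^sub>v z) = c * (conjugate x \<bullet> z)"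
  using assms by (simp add: scalar_prod_def sum_distrib_left mult_ac)

lemma mv_minus: fixes A :: "complex mat"
  assumes "A \<in> carrier_mat n k" "x \<in> carrier_vec k" "y \<in> carrier_vec k"
  shows "A *\<^sub>v (x - y) = A *\<^sub>v x - A *\<^sub>v y"
  using assms by (rule mult_minus_distrib_mat_vec)

lemma mv_smult: fixes A :: "complex mat"
  assumes "A \<in> carrier_mat n k" "x \<in> carrier_vec k"
  shows "A *\<^sub>v (c \<cdot>\<^sub>v x) = c \<cdot>\<^sub>v (A *\<^sub>v x)"
  using assms by (rule mult_mat_vec)

lemma cs_lin: assumes "x \<in> carrier_vec n" "z \<in> carrier_vec n"
  shows "cmod (conjugate x \<bullet> z) \<le> 1 + vnorm2 x * vnorm2 z"
  using cmod_le_sq[of "conjugate x \<bullet> z"] cs_vec[OF assms] by linarith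

context prb
begin

definition "P a = minv (S a)"

definition "nonneg a \<longleftrightarrow> (\<forall>k<N. 0 \<le> a k)"

lemma S_coer: "nonneg a \<Longrightarrow> coercive sw2 m (S a)"
  unfolding coercive_def nonneg_def using S_coercive by auto

lemma P_carrier[simp]: "nonneg a \<Longrightarrow> P a \<in> carrier_mat m m"
  unfolding P_def using coercive_inv(1)[OF S_coer sw2] by simp

lemma SP: "nonneg a \<Longrightarrow> S a * P a = 1\<^sub>m m"
  unfolding P_def using coercive_inv(2)[OF S_coer sw2] by simp

lemma P_herm: "nonneg a \<Longrightarrow> mat_adjoint (P a) = P a"
  unfolding P_def using inv_herm[OF S_coer sw2 S_herm] by simp

lemma P_bound: "nonneg a \<Longrightarrow> w \<in> carrier_vec m \<Longrightarrow> vnorm2 (P a *\<^sub>v w) \<le> vnorm2 w / sw2^2"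
  unfolding P_def using inv_bound[OF S_coer sw2] sw2 by (simp add: field_simps)

lemma P_sp: assumes "nonneg a" "x \<in> carrier_vec m" "z \<in> carrier_vec m"
  shows "conjugate x \<bullet> (P a *\<^sub>v z) = conjugate (P a *\<^sub>v x) \<bullet> z"
  using adj_sprod[OF P_carrier[OF assms(1)] assms(2) assms(3)] P_herm[OF assms(1)] by simp

lemma P_apply: "nonneg a \<Longrightarrow> w \<in> carrier_vec m \<Longrightarrow> S a *\<^sub>v (P a *\<^sub>v w) = w"
  unfolding P_def by (rule inv_apply(1)[OF S_coer sw2])

lemma P_apply2: "nonneg a \<Longrightarrow> w \<in> carrier_vec m \<Longrightarrow> P a *\<^sub>v (S a *\<^sub>v w) = w"
  unfolding P_def by (rule inv_apply(2)[OF S_coer sw2])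

lemma nonneg_upd: "nonneg a \<Longrightarrow> 0 \<le> a n + d \<Longrightarrow> nonneg (a(n := a n + d))"
  unfolding nonneg_def by auto

lemma Pd_ident:
  assumes n: "n < N" and a: "nonneg a" and ad: "0 \<le> a n + d" and z: "z \<in> carrier_vec m"
  shows "P (a(n := a n + d)) *\<^sub>v z = P a *\<^sub>v z - complex_of_real d \<cdot>\<^sub>v (P (a(n := a n + d)) *\<^sub>v (Bn n *\<^sub>v (P a *\<^sub>v z)))"
proof -
  let ?a = "a(n := a n + d)"
  have a': "nonneg ?a" by (rule nonneg_upd[OF a ad])
  define w where "w = P a *\<^sub>v z"
  have w: "w \<in> carrier_vec m" unfolding w_def using P_carrier[OF a] z by simp
  have B: "Bn n \<in> carrier_mat m m" by (rule Bn_carrier[OF n])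
  have Bw: "Bn n *\<^sub>v w \<in> carrier_vec m" using B w by simp
  have "S ?a *\<^sub>v w = S a *\<^sub>v w + complex_of_real d \<cdot>\<^sub>v (Bn n *\<^sub>v w)"
    unfolding S_upd[OF n] using B w by (simp add: add_mult_distrib_mat_vec[of _ m m] smult_mat_vec)
  also have "S a *\<^sub>v w = z" unfolding w_def by (rule P_apply[OF a z])
  finally have e: "S ?a *\<^sub>v w = z + complex_of_real d \<cdot>\<^sub>v (Bn n *\<^sub>v w)" .
  have "w = P ?a *\<^sub>v (S ?a *\<^sub>v w)" by (rule P_apply2[OF a' w, symmetric])
  also have "\<dots> = P ?a *\<^sub>v z + complex_of_real d \<cdot>\<^sub>v (P ?a *\<^sub>v (Bn n *\<^sub>v w))"
    unfolding e using P_carrier[OF a'] z Bw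
    by (simp add: mult_add_distrib_mat_vec[of _ m m] mv_smult[of _ m m])
  finally have e2: "w = P ?a *\<^sub>v z + complex_of_real d \<cdot>\<^sub>v (P ?a *\<^sub>v (Bn n *\<^sub>v w))" .
  show ?thesis unfolding w_def[symmetric]
  proof (rule eq_vecI)
    fix i assume "i < dim_vec (w - complex_of_real d \<cdot>\<^sub>v (P ?a *\<^sub>v (Bn n *\<^sub>v w)))"
    hence i: "i < m" using w P_carrier[OF a'] by simp
    have "w $ i = (P ?a *\<^sub>v z) $ i + complex_of_real d * (P ?a *\<^sub>v (Bn n *\<^sub>v w)) $ i"
      using arg_cong[OF e2, of "\<lambda>v. v $ i"] i P_carrier[OF a'] by simp
    thus "(P ?a *\<^sub>v z) $ i = (w - complex_of_real d \<cdot>\<^sub>v (P ?a *\<^sub>v (Bn n *\<^sub>v w))) $ i"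
      using i P_carrier[OF a'] w by simp
  qed (use P_carrier[OF a'] w in simp)
qed


lemma spP_bound: assumes a: "nonneg a" and x: "x \<in> carrier_vec m" and z: "z \<in> carrier_vec m"
  and X: "vnorm2 x \<le> XX" and Z: "vnorm2 z \<le> ZZ"
  shows "cmod (conjugate x \<bullet> (P a *\<^sub>v z)) \<le> 1 + XX * ZZ / sw2^2"
proof -
  have Pz: "P a *\<^sub>v z \<in> carrier_vec m" using P_carrier[OF a] z by simp
  have "cmod (conjugate x \<bullet> (P a *\<^sub>v z)) \<le> 1 + vnorm2 x * vnorm2 (P a *\<^sub>v z)" by (rule cs_lin[OF x Pz])
  also have "vnorm2 x * vnorm2 (P a *\<^sub>v z) \<le> XX * (ZZ / sw2^2)"
  proof (rule mult_mono[OF X])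
    show "vnorm2 (P a *\<^sub>v z) \<le> ZZ / sw2^2" using P_bound[OF a z] Z sw2 by (smt (verit) divide_right_mono zero_le_power2)
  qed (use vnorm2_nonneg X in \<open>auto intro: order_trans\<close>)
  finally show ?thesis by simp
qed

lemma BP_bound: assumes n: "n < N" and a: "nonneg a" and z: "z \<in> carrier_vec m" and Z: "vnorm2 z \<le> ZZ"
  shows "vnorm2 (Bn n *\<^sub>v (P a *\<^sub>v z)) \<le> fro (Bn n) / sw2^2 * ZZ"
proof -
  have Pz: "P a *\<^sub>v z \<in> carrier_vec m" using P_carrier[OF a] z by simp
  have "vnorm2 (Bn n *\<^sub>v (P a *\<^sub>v z)) \<le> fro (Bn n) * vnorm2 (P a *\<^sub>v z)"
    by (rule vnorm2_mult) (use Bn_carrier[OF n] Pz in simp)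
  also have "\<dots> \<le> fro (Bn n) * (ZZ / sw2^2)"
  proof (rule mult_left_mono)
    have "vnorm2 z / sw2^2 \<le> ZZ / sw2^2" by (rule divide_right_mono[OF Z]) simp
    thus "vnorm2 (P a *\<^sub>v z) \<le> ZZ / sw2^2" using P_bound[OF a z] by linarith
  qed (rule fro_nonneg)
  finally show ?thesis by simp
qed

lemma sp_Pd:
  assumes n: "n < N" and a: "nonneg a" and ad: "0 \<le> a n + d" and x: "x \<in> carrier_vec m" and z: "z \<in> carrier_vec m"
  shows "conjugate x \<bullet> (P (a(n := a n + d)) *\<^sub>v z) = conjugate x \<bullet> (P a *\<^sub>v z)
     - complex_of_real d * (conjugate x \<bullet> (P (a(n := a n + d)) *\<^sub>v (Bn n *\<^sub>v (P a *\<^sub>v z))))"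
proof -
  have a': "nonneg (a(n := a n + d))" by (rule nonneg_upd[OF a ad])
  have c1: "P a *\<^sub>v z \<in> carrier_vec m" using P_carrier[OF a] z by simp
  have c2: "P (a(n := a n + d)) *\<^sub>v (Bn n *\<^sub>v (P a *\<^sub>v z)) \<in> carrier_vec m"
    using P_carrier[OF a'] Bn_carrier[OF n] c1 by simp
  show ?thesis unfolding Pd_ident[OF n a ad z]
    using sp_minus_right[OF x c1 smult_carrier_vec[THEN iffD2, OF c2]] sp_smult_right[OF x c2] by simp
qed

lemma quad_expand:
  assumes n: "n < N" and a: "nonneg a" and ad: "0 \<le> a n + d"
  shows "hform (r (a(n := a n + d))) (P (a(n := a n + d))) (r (a(n := a n + d)))
    = hform (r a) (P a) (r a)
      - complex_of_real d * (conjugate (r a) \<bullet> (P a *\<^sub>v (Bn n *\<^sub>v (P a *\<^sub>v r a))))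
      - complex_of_real d * (hform (r a) (P a) (b n) + hform (b n) (P a) (r a))
      + (complex_of_real d)^2 * (
          conjugate (r a) \<bullet> (P (a(n := a n + d)) *\<^sub>v (Bn n *\<^sub>v (P a *\<^sub>v (Bn n *\<^sub>v (P a *\<^sub>v r a)))))
        + conjugate (r a) \<bullet> (P (a(n := a n + d)) *\<^sub>v (Bn n *\<^sub>v (P a *\<^sub>v b n)))
        + conjugate (b n) \<bullet> (P (a(n := a n + d)) *\<^sub>v (Bn n *\<^sub>v (P a *\<^sub>v r a)))
        + conjugate (b n) \<bullet> (P (a(n := a n + d)) *\<^sub>v b n))"
proof -
  define a' where "a' = a(n := a n + d)"
  let ?D = "complex_of_real d"
  have a'n: "nonneg a'" unfolding a'_def by (rule nonneg_upd[OF a ad])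
  have ra: "r a' = r a - complex_of_real d \<cdot>\<^sub>v b n" unfolding a'_def by (rule r_upd[OF n])
  note spd = sp_Pd[OF n a ad, folded a'_def]
  have r: "r a \<in> carrier_vec m" and bb: "b n \<in> carrier_vec m" using n by auto
  have Pd: "P a' \<in> carrier_mat m m" using a'n by simp
  have Pdr: "P a' *\<^sub>v r a \<in> carrier_vec m" and Pdb: "P a' *\<^sub>v b n \<in> carrier_vec m" using Pd r bb by auto
  have BPr: "Bn n *\<^sub>v (P a *\<^sub>v r a) \<in> carrier_vec m" using Bn_carrier[OF n] P_carrier[OF a] r by simp
  have "hform (r a') (P a') (r a') = conjugate (r a - ?D \<cdot>\<^sub>v b n) \<bullet> (P a' *\<^sub>v (r a - ?D \<cdot>\<^sub>v b n))"
    unfolding hform_def ra ..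
  also have "P a' *\<^sub>v (r a - ?D \<cdot>\<^sub>v b n) = P a' *\<^sub>v r a - ?D \<cdot>\<^sub>v (P a' *\<^sub>v b n)"
    using mv_minus[OF Pd r smult_carrier_vec[THEN iffD2, OF bb]] mv_smult[OF Pd bb] by simp
  also have "conjugate (r a - ?D \<cdot>\<^sub>v b n) \<bullet> (P a' *\<^sub>v r a - ?D \<cdot>\<^sub>v (P a' *\<^sub>v b n))
     = conjugate (r a) \<bullet> (P a' *\<^sub>v r a) - ?D * (conjugate (r a) \<bullet> (P a' *\<^sub>v b n))
       - ?D * (conjugate (b n) \<bullet> (P a' *\<^sub>v r a)) + ?D^2 * (conjugate (b n) \<bullet> (P a' *\<^sub>v b n))"
    using r bb Pdr Pdb
    by (simp add: sp_minus_left[of _ m] sp_minus_right[of _ m] sp_smult_left[of _ m] sp_smult_right[of _ m]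
        algebra_simps power2_eq_square)
  also have "conjugate (r a) \<bullet> (P a' *\<^sub>v r a) = conjugate (r a) \<bullet> (P a *\<^sub>v r a)
     - ?D * (conjugate (r a) \<bullet> (P a *\<^sub>v (Bn n *\<^sub>v (P a *\<^sub>v r a))))
     + ?D^2 * (conjugate (r a) \<bullet> (P a' *\<^sub>v (Bn n *\<^sub>v (P a *\<^sub>v (Bn n *\<^sub>v (P a *\<^sub>v r a))))))"
    unfolding spd[OF r r] spd[OF r BPr] by (simp add: algebra_simps power2_eq_square)
  also have "conjugate (r a) \<bullet> (P a' *\<^sub>v b n) = conjugate (r a) \<bullet> (P a *\<^sub>v b n)
     - ?D * (conjugate (r a) \<bullet> (P a' *\<^sub>v (Bn n *\<^sub>v (P a *\<^sub>v b n))))"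
    by (rule spd[OF r bb])
  also have "conjugate (b n) \<bullet> (P a' *\<^sub>v r a) = conjugate (b n) \<bullet> (P a *\<^sub>v r a)
     - ?D * (conjugate (b n) \<bullet> (P a' *\<^sub>v (Bn n *\<^sub>v (P a *\<^sub>v r a))))"
    by (rule spd[OF bb r])
  finally show ?thesis unfolding hform_def a'_def[symmetric] by (simp add: algebra_simps power2_eq_square)
qed

lemma sp_PBP: assumes n: "n < N" and a: "nonneg a" and x: "x \<in> carrier_vec m"
  shows "conjugate x \<bullet> (P a *\<^sub>v (Bn n *\<^sub>v (P a *\<^sub>v x))) = complex_of_real (vnorm2 (mat_adjoint (X n) *\<^sub>v (P a *\<^sub>v x)))"
proof -
  have Px: "P a *\<^sub>v x \<in> carrier_vec m" using P_carrier[OF a] x by simp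
  have BPx: "Bn n *\<^sub>v (P a *\<^sub>v x) \<in> carrier_vec m" using Bn_carrier[OF n] Px by simp
  have "conjugate x \<bullet> (P a *\<^sub>v (Bn n *\<^sub>v (P a *\<^sub>v x))) = conjugate (P a *\<^sub>v x) \<bullet> (Bn n *\<^sub>v (P a *\<^sub>v x))"
    by (rule P_sp[OF a x BPx])
  also have "\<dots> = hform (P a *\<^sub>v x) (X n * mat_adjoint (X n)) (P a *\<^sub>v x)"
    unfolding hform_def Bn_XX[OF n] ..
  also have "\<dots> = complex_of_real (vnorm2 (mat_adjoint (X n) *\<^sub>v (P a *\<^sub>v x)))"
    by (rule hform_XX[OF X_carrier[OF n] Px])
  finally show ?thesis .
qed

lemma hform_P_swap: assumes a: "nonneg a" and x: "x \<in> carrier_vec m" and z: "z \<in> carrier_vec m"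
  shows "Re (hform x (P a) z) = Re (hform z (P a) x)"
  using hform_herm[OF P_carrier[OF a] P_herm[OF a] x z] by simp

lemma quad_bound:
  assumes n: "n < N" and a: "nonneg a" and ad: "0 \<le> a n + d" and rb: "vnorm2 (r a) \<le> \<rho>"
  shows "Re (hform (r (a(n := a n + d))) (P (a(n := a n + d))) (r (a(n := a n + d))))
    \<le> Re (hform (r a) (P a) (r a)) - d * vnorm2 (mat_adjoint (X n) *\<^sub>v (P a *\<^sub>v r a))
       - 2 * d * Re (hform (r a) (P a) (b n))
       + d^2 * (4 + (\<rho> * (fro (Bn n) / sw2^2 * (fro (Bn n) / sw2^2 * \<rho>)) + \<rho> * (fro (Bn n) / sw2^2 * vnorm2 (b n))
            + vnorm2 (b n) * (fro (Bn n) / sw2^2 * \<rho>) + vnorm2 (b n) * vnorm2 (b n)) / sw2^2)"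
proof -
  define a' where "a' = a(n := a n + d)"
  have a'n: "nonneg a'" unfolding a'_def by (rule nonneg_upd[OF a ad])
  have r: "r a \<in> carrier_vec m" and bb: "b n \<in> carrier_vec m" using n by auto
  let ?c = "fro (Bn n) / sw2^2"
  let ?\<beta> = "vnorm2 (b n)"
  have B: "Bn n \<in> carrier_mat m m" by (rule Bn_carrier[OF n])
  have Pr: "P a *\<^sub>v r a \<in> carrier_vec m" using P_carrier[OF a] r by simp
  have Pb: "P a *\<^sub>v b n \<in> carrier_vec m" using P_carrier[OF a] bb by simp
  have BPr: "Bn n *\<^sub>v (P a *\<^sub>v r a) \<in> carrier_vec m" using B Pr by simp
  have BPb: "Bn n *\<^sub>v (P a *\<^sub>v b n) \<in> carrier_vec m" using B Pb by simp
  have BPBPr: "Bn n *\<^sub>v (P a *\<^sub>v (Bn n *\<^sub>v (P a *\<^sub>v r a))) \<in> carrier_vec m" using B P_carrier[OF a] BPr by simp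
  have nBPr: "vnorm2 (Bn n *\<^sub>v (P a *\<^sub>v r a)) \<le> ?c * \<rho>" by (rule BP_bound[OF n a r rb])
  have nBPb: "vnorm2 (Bn n *\<^sub>v (P a *\<^sub>v b n)) \<le> ?c * ?\<beta>" by (rule BP_bound[OF n a bb order_refl])
  have nBPBPr: "vnorm2 (Bn n *\<^sub>v (P a *\<^sub>v (Bn n *\<^sub>v (P a *\<^sub>v r a)))) \<le> ?c * (?c * \<rho>)"
    by (rule BP_bound[OF n a BPr nBPr])
  define R where "R = conjugate (r a) \<bullet> (P a' *\<^sub>v (Bn n *\<^sub>v (P a *\<^sub>v (Bn n *\<^sub>v (P a *\<^sub>v r a)))))
        + conjugate (r a) \<bullet> (P a' *\<^sub>v (Bn n *\<^sub>v (P a *\<^sub>v b n)))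
        + conjugate (b n) \<bullet> (P a' *\<^sub>v (Bn n *\<^sub>v (P a *\<^sub>v r a)))
        + conjugate (b n) \<bullet> (P a' *\<^sub>v b n)"
  have Rb: "cmod R \<le> 4 + (\<rho> * (?c * (?c * \<rho>)) + \<rho> * (?c * ?\<beta>) + ?\<beta> * (?c * \<rho>) + ?\<beta> * ?\<beta>) / sw2^2"
  proof -
    have t1: "cmod (conjugate (r a) \<bullet> (P a' *\<^sub>v (Bn n *\<^sub>v (P a *\<^sub>v (Bn n *\<^sub>v (P a *\<^sub>v r a)))))) \<le> 1 + \<rho> * (?c * (?c * \<rho>)) / sw2^2"
      by (rule spP_bound[OF a'n r BPBPr rb nBPBPr])
    have t2: "cmod (conjugate (r a) \<bullet> (P a' *\<^sub>v (Bn n *\<^sub>v (P a *\<^sub>v b n)))) \<le> 1 + \<rho> * (?c * ?\<beta>) / sw2^2"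
      by (rule spP_bound[OF a'n r BPb rb nBPb])
    have t3: "cmod (conjugate (b n) \<bullet> (P a' *\<^sub>v (Bn n *\<^sub>v (P a *\<^sub>v r a)))) \<le> 1 + ?\<beta> * (?c * \<rho>) / sw2^2"
      by (rule spP_bound[OF a'n bb BPr order_refl nBPr])
    have t4: "cmod (conjugate (b n) \<bullet> (P a' *\<^sub>v b n)) \<le> 1 + ?\<beta> * ?\<beta> / sw2^2"
      by (rule spP_bound[OF a'n bb bb order_refl order_refl])
    have "cmod R \<le> cmod (conjugate (r a) \<bullet> (P a' *\<^sub>v (Bn n *\<^sub>v (P a *\<^sub>v (Bn n *\<^sub>v (P a *\<^sub>v r a))))))
        + cmod (conjugate (r a) \<bullet> (P a' *\<^sub>v (Bn n *\<^sub>v (P a *\<^sub>v b n))))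
        + cmod (conjugate (b n) \<bullet> (P a' *\<^sub>v (Bn n *\<^sub>v (P a *\<^sub>v r a))))
        + cmod (conjugate (b n) \<bullet> (P a' *\<^sub>v b n))"
      unfolding R_def by (intro order_trans[OF norm_triangle_ineq] add_mono order_refl)
    also have "\<dots> \<le> 4 + (\<rho> * (?c * (?c * \<rho>)) + \<rho> * (?c * ?\<beta>) + ?\<beta> * (?c * \<rho>) + ?\<beta> * ?\<beta>) / sw2^2"
      using t1 t2 t3 t4 unfolding add_divide_distrib by linarith
    finally show ?thesis .
  qed
  have e: "hform (r a') (P a') (r a') = hform (r a) (P a) (r a)
      - complex_of_real d * complex_of_real (vnorm2 (mat_adjoint (X n) *\<^sub>v (P a *\<^sub>v r a)))
      - complex_of_real d * (hform (r a) (P a) (b n) + hform (b n) (P a) (r a))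
      + (complex_of_real d)^2 * R"
    using quad_expand[OF n a ad, folded a'_def] unfolding R_def sp_PBP[OF n a r] .
  have "Re (hform (r a') (P a') (r a')) = Re (hform (r a) (P a) (r a)) - d * vnorm2 (mat_adjoint (X n) *\<^sub>v (P a *\<^sub>v r a))
      - 2 * d * Re (hform (r a) (P a) (b n)) + d^2 * Re R"
    unfolding e using hform_P_swap[OF a bb r] by (simp add: power2_eq_square)
  also have "d^2 * Re R \<le> d^2 * cmod R" by (intro mult_left_mono complex_Re_le_cmod) simp
  also have "\<dots> \<le> d^2 * (4 + (\<rho> * (?c * (?c * \<rho>)) + \<rho> * (?c * ?\<beta>) + ?\<beta> * (?c * \<rho>) + ?\<beta> * ?\<beta>) / sw2^2)"
    by (intro mult_left_mono Rb) simp
  finally show ?thesis unfolding a'_def by simp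
qed

end

lemma trace_swap: fixes A B :: "complex mat"
  assumes A: "A \<in> carrier_mat n k" and B: "B \<in> carrier_mat k n"
  shows "(\<Sum>i<n. (A * B) $$ (i,i)) = (\<Sum>j<k. (B * A) $$ (j,j))"
proof -
  have "(\<Sum>i<n. (A * B) $$ (i,i)) = (\<Sum>i<n. \<Sum>j<k. A $$ (i,j) * B $$ (j,i))"
    using A B by (intro sum.cong refl) (simp add: scalar_prod_def lessThan_atLeast0)
  also have "\<dots> = (\<Sum>j<k. \<Sum>i<n. A $$ (i,j) * B $$ (j,i))" by (rule sum.swap)
  also have "\<dots> = (\<Sum>j<k. (B * A) $$ (j,j))"
    using A B by (intro sum.cong refl) (simp add: scalar_prod_def lessThan_atLeast0 mult.commute)
  finally show ?thesis .
qed

lemma vnorm2_col: "j < dim_col A \<Longrightarrow> vnorm2 (col A j) \<le> fro A"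
  unfolding vnorm2_def fro_def
proof -
  assume j: "j < dim_col A"
  have "(\<Sum>i<dim_vec (col A j). (cmod (col A j $ i))^2) = (\<Sum>i<dim_row A. (cmod (A $$ (i,j)))^2)"
    by (intro sum.cong) (use j in auto)
  also have "\<dots> \<le> (\<Sum>i<dim_row A. \<Sum>j<dim_col A. (cmod (A $$ (i,j)))^2)"
    by (intro sum_mono member_le_sum) (use j in auto)
  finally show "(\<Sum>i<dim_vec (col A j). (cmod (col A j $ i))^2) \<le> (\<Sum>i<dim_row A. \<Sum>j<dim_col A. (cmod (A $$ (i,j)))^2)" .
qed

context prb
begin

lemma C_entry_bound: assumes n: "n < N" and a: "nonneg a" and i: "i < m" and j: "j < m"
  shows "cmod ((P a * Bn n) $$ (i,j)) \<le> 1 + fro (Bn n) / sw2^2"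
proof -
  have B: "Bn n \<in> carrier_mat m m" by (rule Bn_carrier[OF n])
  have cj: "col (Bn n) j \<in> carrier_vec m" using B j by simp
  have e: "(P a * Bn n) $$ (i,j) = (P a *\<^sub>v col (Bn n) j) $ i"
    using P_carrier[OF a] B i j by simp
  have "(cmod ((P a * Bn n) $$ (i,j)))^2 \<le> vnorm2 (P a *\<^sub>v col (Bn n) j)"
    unfolding e by (rule vnorm2_entry) (use P_carrier[OF a] i in simp)
  also have "\<dots> \<le> vnorm2 (col (Bn n) j) / sw2^2" by (rule P_bound[OF a cj])
  also have "\<dots> \<le> fro (Bn n) / sw2^2"
    by (rule divide_right_mono) (use vnorm2_col[of j "Bn n"] B j in auto)
  finally show ?thesis using cmod_le_sq[of "(P a * Bn n) $$ (i,j)"] by linarith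
qed

lemma trace_C: assumes n: "n < N" and a: "nonneg a"
  shows "(\<Sum>i<m. (P a * Bn n) $$ (i,i)) = mtrace (mat_adjoint (X n) * P a * X n)"
proof -
  have Xc: "X n \<in> carrier_mat m (rk n)" by (rule X_carrier[OF n])
  have Pc: "P a \<in> carrier_mat m m" using a by simp
  have PX: "P a * X n \<in> carrier_mat m (rk n)" using Xc Pc by simp
  have XH: "mat_adjoint (X n) \<in> carrier_mat (rk n) m" using Xc by simp
  have "P a * Bn n = (P a * X n) * mat_adjoint (X n)"
    unfolding Bn_XX[OF n] using assoc_mult_mat[OF Pc Xc XH] by simp
  hence "(\<Sum>i<m. (P a * Bn n) $$ (i,i)) = (\<Sum>j<rk n. (mat_adjoint (X n) * (P a * X n)) $$ (j,j))"
    using trace_swap[OF PX XH] by simp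
  also have "mat_adjoint (X n) * (P a * X n) = mat_adjoint (X n) * P a * X n"
    using assoc_mult_mat[OF XH Pc Xc] by simp
  also have "(\<Sum>j<rk n. (mat_adjoint (X n) * P a * X n) $$ (j,j)) = mtrace (mat_adjoint (X n) * P a * X n)"
    unfolding mtrace_def using XH Pc Xc by simp
  finally show ?thesis .
qed

lemma S_factor: assumes n: "n < N" and a: "nonneg a"
  shows "S (a(n := a n + d)) = S a * (1\<^sub>m m + complex_of_real d \<cdot>\<^sub>m (P a * Bn n))"
proof -
  have B: "Bn n \<in> carrier_mat m m" by (rule Bn_carrier[OF n])
  have Pc: "P a \<in> carrier_mat m m" using a by simp
  have C: "P a * Bn n \<in> carrier_mat m m" using B Pc by simp
  have "S a * (1\<^sub>m m + complex_of_real d \<cdot>\<^sub>m (P a * Bn n)) = S a * 1\<^sub>m m + S a * (complex_of_real d \<cdot>\<^sub>m (P a * Bn n))"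
    by (rule mult_add_distrib_mat[of _ m m]) (use C in auto)
  also have "S a * 1\<^sub>m m = S a" by simp
  also have "S a * (complex_of_real d \<cdot>\<^sub>m (P a * Bn n)) = complex_of_real d \<cdot>\<^sub>m (S a * (P a * Bn n))"
    by (rule mult_smult_distrib[of _ m m]) (use C in auto)
  also have "S a * (P a * Bn n) = Bn n"
    using assoc_mult_mat[OF S_carrier Pc B, symmetric] SP[OF a] B by simp
  finally show ?thesis unfolding S_upd[OF n] ..
qed

lemma logdet_bound:
  assumes n: "n < N" and a: "nonneg a" and ad: "0 \<le> a n + d" and d1: "\<bar>d\<bar> \<le> 1"
  shows "ln (Re (det (S (a(n := a n + d))))) \<le> ln (Re (det (S a))) + d * Re (mtrace (mat_adjoint (X n) * P a * X n))
    + d^2 * ((1 + fro (Bn n) / sw2^2) * m^2 * (2 + fro (Bn n) / sw2^2) ^ m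
      + card {p. p permutes {0..<m}} * ((1 + fro (Bn n) / sw2^2)^2 * (2 + fro (Bn n) / sw2^2) ^ m))"
proof -
  define a' where "a' = a(n := a n + d)"
  have a'n: "nonneg a'" unfolding a'_def by (rule nonneg_upd[OF a ad])
  define C where "C = P a * Bn n"
  define \<gamma> where "\<gamma> = 1 + fro (Bn n) / sw2^2"
  have g0: "0 \<le> \<gamma>" unfolding \<gamma>_def using fro_nonneg[of "Bn n"] by simp
  have Cc: "C \<in> carrier_mat m m" unfolding C_def using Bn_carrier[OF n] P_carrier[OF a] by simp
  have E: "1\<^sub>m m + complex_of_real d \<cdot>\<^sub>m C \<in> carrier_mat m m" using Cc by simp
  define D where "D = det (1\<^sub>m m + complex_of_real d \<cdot>\<^sub>m C)"
  have dS: "det (S a') = det (S a) * D"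
    unfolding a'_def S_factor[OF n a] D_def C_def by (rule det_mult[OF S_carrier]) (use E C_def in simp)
  have p1: "Re (det (S a)) > 0" "Im (det (S a)) = 0" using det_pos[OF S_coer[OF a] sw2 S_herm] by auto
  have p2: "Re (det (S a')) > 0" using det_pos[OF S_coer[OF a'n] sw2 S_herm] by auto
  have ReS: "Re (det (S a')) = Re (det (S a)) * Re D" unfolding dS using p1 by simp
  have ReD: "Re D > 0" using p1 p2 ReS by (simp add: zero_less_mult_iff)
  have L1: "ln (Re (det (S a'))) = ln (Re (det (S a))) + ln (Re D)" unfolding ReS using p1 ReD by (simp add: ln_mult)
  have L2: "ln (Re D) \<le> Re D - 1" using ReD by (rule ln_le_minus_one)
  have L3: "Re D - 1 = Re (D - 1 - complex_of_real d * (\<Sum>i<m. C $$ (i,i))) + d * Re (\<Sum>i<m. C $$ (i,i))" by simp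
  have L4: "Re (D - 1 - complex_of_real d * (\<Sum>i<m. C $$ (i,i))) \<le> cmod (D - 1 - complex_of_real d * (\<Sum>i<m. C $$ (i,i)))"
    by (rule complex_Re_le_cmod)
  have L5: "cmod (D - 1 - complex_of_real d * (\<Sum>i<m. C $$ (i,i))) \<le> d^2 * (\<gamma> * m^2 * (1 + \<gamma>) ^ m + card {p. p permutes {0..<m}} * (\<gamma>^2 * (1 + \<gamma>) ^ m))"
  proof -
    have "cmod (C $$ (i,j)) \<le> \<gamma>" if "i < m" "j < m" for i j
      unfolding C_def \<gamma>_def by (rule C_entry_bound[OF n a that])
    from det_bound[OF Cc this g0 d1] show ?thesis unfolding D_def by simp
  qed
  have L6: "(\<Sum>i<m. C $$ (i,i)) = mtrace (mat_adjoint (X n) * P a * X n)" unfolding C_def by (rule trace_C[OF n a])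
  have F: "ln (Re (det (S a'))) \<le> ln (Re (det (S a))) + (d^2 * (\<gamma> * m^2 * (1 + \<gamma>) ^ m + card {p. p permutes {0..<m}} * (\<gamma>^2 * (1 + \<gamma>) ^ m))
     + d * Re (mtrace (mat_adjoint (X n) * P a * X n)))"
    using L1 L2 L3 L4 L5 unfolding L6 by linarith
  have g2: "2 + fro (Bn n) / sw2^2 = 1 + \<gamma>" unfolding \<gamma>_def by simp
  show ?thesis unfolding a'_def[symmetric] g2 \<gamma>_def[symmetric] using F by (simp only: ac_simps)
qed

end

lemma real_help:
  fixes x1 x2 x3 x4 c1 c2 c3 c4 d :: real
  assumes "\<bar>x1\<bar> \<le> c1" "\<bar>x2\<bar> \<le> c2" "\<bar>x3\<bar> \<le> c3" "\<bar>x4\<bar> \<le> c4" "\<bar>d\<bar> \<le> 1"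
  shows "\<bar>d^2 * x1 + d^2 * x2 + 2 * d^2 * x3 - d^3 * x4\<bar> \<le> d^2 * (c1 + c2 + 2 * c3 + c4)"
proof -
  have d2: "0 \<le> d^2" by simp
  have a1: "\<bar>d^2 * x1\<bar> \<le> d^2 * c1" using assms(1) d2 by (simp add: abs_mult mult_left_mono)
  have a2: "\<bar>d^2 * x2\<bar> \<le> d^2 * c2" using assms(2) d2 by (simp add: abs_mult mult_left_mono)
  have a3: "\<bar>2 * d^2 * x3\<bar> \<le> 2 * (d^2 * c3)" using assms(3) d2 by (simp add: abs_mult mult_left_mono)
  have "\<bar>d\<bar> * \<bar>x4\<bar> \<le> 1 * c4" using assms(4,5) by (intro mult_mono) auto
  hence "d^2 * (\<bar>d\<bar> * \<bar>x4\<bar>) \<le> d^2 * c4" using d2 by (simp add: mult_left_mono)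
  hence a4: "\<bar>d^3 * x4\<bar> \<le> d^2 * c4" by (simp add: abs_mult power3_eq_cube power2_eq_square mult_ac)
  have "\<bar>d^2 * x1 + d^2 * x2 + 2 * d^2 * x3 - d^3 * x4\<bar> \<le> \<bar>d^2 * x1\<bar> + \<bar>d^2 * x2\<bar> + \<bar>2 * d^2 * x3\<bar> + \<bar>d^3 * x4\<bar>"
    by linarith
  thus ?thesis using a1 a2 a3 a4 by (simp add: algebra_simps)
qed

context prb
begin

definition "G a n = mat_adjoint (X n) * P a * X n"
definition "Q a n d = P a * X n * (1\<^sub>m (rk n) - complex_of_real d \<cdot>\<^sub>m G a n) * mat_adjoint (X n) * P a"

lemma G_carrier: "n < N \<Longrightarrow> nonneg a \<Longrightarrow> G a n \<in> carrier_mat (rk n) (rk n)"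
  unfolding G_def using X_carrier[of n] P_carrier[of a] by (metis adj_carrier mult_carrier_mat)

lemma G_apply: assumes n: "n < N" and a: "nonneg a" and w: "w \<in> carrier_vec (rk n)"
  shows "G a n *\<^sub>v w = mat_adjoint (X n) *\<^sub>v (P a *\<^sub>v (X n *\<^sub>v w))"
proof -
  have Xc: "X n \<in> carrier_mat m (rk n)" by (rule X_carrier[OF n])
  have XH: "mat_adjoint (X n) \<in> carrier_mat (rk n) m" using Xc by simp
  have Pc: "P a \<in> carrier_mat m m" using a by simp
  have "G a n *\<^sub>v w = (mat_adjoint (X n) * P a) *\<^sub>v (X n *\<^sub>v w)"
    unfolding G_def by (rule assoc_mult_mat_vec[OF mult_carrier_mat[OF XH Pc] Xc w])
  also have "\<dots> = mat_adjoint (X n) *\<^sub>v (P a *\<^sub>v (X n *\<^sub>v w))"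
    by (rule assoc_mult_mat_vec[OF XH Pc]) (use Xc w in simp)
  finally show ?thesis .
qed

lemma hform_Q: assumes n: "n < N" and a: "nonneg a" and x: "x \<in> carrier_vec m" and z: "z \<in> carrier_vec m"
  shows "hform x (Q a n d) z = conjugate (mat_adjoint (X n) *\<^sub>v (P a *\<^sub>v x)) \<bullet> (mat_adjoint (X n) *\<^sub>v (P a *\<^sub>v z))
     - complex_of_real d * (conjugate (mat_adjoint (X n) *\<^sub>v (P a *\<^sub>v x)) \<bullet> (G a n *\<^sub>v (mat_adjoint (X n) *\<^sub>v (P a *\<^sub>v z))))"
proof -
  have Xc: "X n \<in> carrier_mat m (rk n)" by (rule X_carrier[OF n])
  have XH: "mat_adjoint (X n) \<in> carrier_mat (rk n) m" using Xc by simp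
  have Pc: "P a \<in> carrier_mat m m" using a by simp
  have Gc: "G a n \<in> carrier_mat (rk n) (rk n)" by (rule G_carrier[OF n a])
  have Ic: "1\<^sub>m (rk n) - complex_of_real d \<cdot>\<^sub>m G a n \<in> carrier_mat (rk n) (rk n)" by (intro minus_carrier_mat smult_carrier_mat Gc)
  define w where "w = mat_adjoint (X n) *\<^sub>v (P a *\<^sub>v z)"
  have wc: "w \<in> carrier_vec (rk n)" unfolding w_def using XH Pc z by simp
  have Pz: "P a *\<^sub>v z \<in> carrier_vec m" using Pc z by simp
  have PX: "P a * X n \<in> carrier_mat m (rk n)" using Pc Xc by simp
  have PXI: "P a * X n * (1\<^sub>m (rk n) - complex_of_real d \<cdot>\<^sub>m G a n) \<in> carrier_mat m (rk n)" using PX Ic by simp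
  have PXIX: "P a * X n * (1\<^sub>m (rk n) - complex_of_real d \<cdot>\<^sub>m G a n) * mat_adjoint (X n) \<in> carrier_mat m m"
    using PXI XH by simp
  have Gw: "G a n *\<^sub>v w \<in> carrier_vec (rk n)" using Gc wc by simp
  have "Q a n d *\<^sub>v z = (P a * X n * (1\<^sub>m (rk n) - complex_of_real d \<cdot>\<^sub>m G a n) * mat_adjoint (X n)) *\<^sub>v (P a *\<^sub>v z)"
    unfolding Q_def by (rule assoc_mult_mat_vec[OF PXIX Pc z])
  also have "\<dots> = (P a * X n * (1\<^sub>m (rk n) - complex_of_real d \<cdot>\<^sub>m G a n)) *\<^sub>v w"
    unfolding w_def by (rule assoc_mult_mat_vec[OF PXI XH Pz])
  also have "\<dots> = (P a * X n) *\<^sub>v ((1\<^sub>m (rk n) - complex_of_real d \<cdot>\<^sub>m G a n) *\<^sub>v w)"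
    by (rule assoc_mult_mat_vec[OF PX Ic wc])
  also have "(1\<^sub>m (rk n) - complex_of_real d \<cdot>\<^sub>m G a n) *\<^sub>v w = w - complex_of_real d \<cdot>\<^sub>v (G a n *\<^sub>v w)"
    using minus_mult_distrib_mat_vec[OF one_carrier_mat smult_carrier_mat[OF Gc] wc] smult_mat_vec[OF Gc wc] wc by simp
  also have "(P a * X n) *\<^sub>v (w - complex_of_real d \<cdot>\<^sub>v (G a n *\<^sub>v w)) = P a *\<^sub>v (X n *\<^sub>v (w - complex_of_real d \<cdot>\<^sub>v (G a n *\<^sub>v w)))"
    by (rule assoc_mult_mat_vec[OF Pc Xc]) (use wc Gw in simp)
  finally have Qz: "Q a n d *\<^sub>v z = P a *\<^sub>v (X n *\<^sub>v (w - complex_of_real d \<cdot>\<^sub>v (G a n *\<^sub>v w)))" .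
  have v: "w - complex_of_real d \<cdot>\<^sub>v (G a n *\<^sub>v w) \<in> carrier_vec (rk n)" using wc Gw by simp
  have Xv: "X n *\<^sub>v (w - complex_of_real d \<cdot>\<^sub>v (G a n *\<^sub>v w)) \<in> carrier_vec m" using Xc v by simp
  have Px: "P a *\<^sub>v x \<in> carrier_vec m" using Pc x by simp
  have "hform x (Q a n d) z = conjugate x \<bullet> (P a *\<^sub>v (X n *\<^sub>v (w - complex_of_real d \<cdot>\<^sub>v (G a n *\<^sub>v w))))"
    unfolding hform_def Qz ..
  also have "\<dots> = conjugate (P a *\<^sub>v x) \<bullet> (X n *\<^sub>v (w - complex_of_real d \<cdot>\<^sub>v (G a n *\<^sub>v w)))"
    by (rule P_sp[OF a x Xv])
  also have "\<dots> = conjugate (mat_adjoint (X n) *\<^sub>v (P a *\<^sub>v x)) \<bullet> (w - complex_of_real d \<cdot>\<^sub>v (G a n *\<^sub>v w))"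
    using adj_sprod[OF XH Px v] by simp
  also have "\<dots> = conjugate (mat_adjoint (X n) *\<^sub>v (P a *\<^sub>v x)) \<bullet> w
      - complex_of_real d * (conjugate (mat_adjoint (X n) *\<^sub>v (P a *\<^sub>v x)) \<bullet> (G a n *\<^sub>v w))"
  proof -
    have u: "mat_adjoint (X n) *\<^sub>v (P a *\<^sub>v x) \<in> carrier_vec (rk n)" using XH Px by simp
    show ?thesis using sp_minus_right[OF u wc smult_carrier_vec[THEN iffD2, OF Gw]] sp_smult_right[OF u Gw] by simp
  qed
  finally show ?thesis unfolding w_def .
qed

lemma X_dim: "n < N \<Longrightarrow> dim_col (X n) = rk n"
  using X_carrier by (metis carrier_matD(2))

lemma XHP_bound: assumes n: "n < N" and a: "nonneg a" and x: "x \<in> carrier_vec m" and X: "vnorm2 x \<le> XX"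
  shows "vnorm2 (mat_adjoint (X n) *\<^sub>v (P a *\<^sub>v x)) \<le> fro (mat_adjoint (X n)) * (XX / sw2^2)"
proof -
  have Px: "P a *\<^sub>v x \<in> carrier_vec m" using P_carrier[OF a] x by simp
  have "vnorm2 (mat_adjoint (X n) *\<^sub>v (P a *\<^sub>v x)) \<le> fro (mat_adjoint (X n)) * vnorm2 (P a *\<^sub>v x)"
    by (rule vnorm2_mult) (use X_carrier[OF n] Px in simp)
  also have "\<dots> \<le> fro (mat_adjoint (X n)) * (XX / sw2^2)"
  proof (rule mult_left_mono)
    have "vnorm2 x / sw2^2 \<le> XX / sw2^2" by (rule divide_right_mono[OF X]) simp
    thus "vnorm2 (P a *\<^sub>v x) \<le> XX / sw2^2" using P_bound[OF a x] by linarith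
  qed (rule fro_nonneg)
  finally show ?thesis .
qed

lemma Gw_bound: assumes n: "n < N" and a: "nonneg a" and w: "w \<in> carrier_vec (rk n)" and W: "vnorm2 w \<le> WW"
  shows "vnorm2 (G a n *\<^sub>v w) \<le> fro (mat_adjoint (X n)) * (fro (X n) * WW / sw2^2)"
proof -
  have Xw: "X n *\<^sub>v w \<in> carrier_vec m" using X_carrier[OF n] w by simp
  have "vnorm2 (X n *\<^sub>v w) \<le> fro (X n) * vnorm2 w" by (rule vnorm2_mult) (use X_carrier[OF n] w in simp)
  also have "\<dots> \<le> fro (X n) * WW" by (rule mult_left_mono[OF W fro_nonneg])
  finally have "vnorm2 (X n *\<^sub>v w) \<le> fro (X n) * WW" .
  from XHP_bound[OF n a Xw this] show ?thesis unfolding G_apply[OF n a w] .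
qed

lemma hQ_bound: assumes n: "n < N" and a: "nonneg a" and x: "x \<in> carrier_vec m" and z: "z \<in> carrier_vec m"
  and X: "vnorm2 x \<le> XX" and Z: "vnorm2 z \<le> ZZ" and d1: "\<bar>d\<bar> \<le> 1"
  shows "cmod (hform x (Q a n d) z) \<le> 2 + (fro (mat_adjoint (X n)) * (XX / sw2^2)) * (fro (mat_adjoint (X n)) * (ZZ / sw2^2))
     + (fro (mat_adjoint (X n)) * (XX / sw2^2)) * (fro (mat_adjoint (X n)) * (fro (X n) * (fro (mat_adjoint (X n)) * (ZZ / sw2^2)) / sw2^2))"
proof -
  let ?UX = "fro (mat_adjoint (X n)) * (XX / sw2^2)"
  let ?UZ = "fro (mat_adjoint (X n)) * (ZZ / sw2^2)"
  let ?u = "mat_adjoint (X n) *\<^sub>v (P a *\<^sub>v x)"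
  let ?w = "mat_adjoint (X n) *\<^sub>v (P a *\<^sub>v z)"
  have XH: "mat_adjoint (X n) \<in> carrier_mat (rk n) m" by (rule adj_carrier[OF X_carrier[OF n]])
  have u: "?u \<in> carrier_vec (rk n)" by (rule mult_mat_vec_carrier[OF XH mult_mat_vec_carrier[OF P_carrier[OF a] x]])
  have w: "?w \<in> carrier_vec (rk n)" by (rule mult_mat_vec_carrier[OF XH mult_mat_vec_carrier[OF P_carrier[OF a] z]])
  have Gw: "G a n *\<^sub>v ?w \<in> carrier_vec (rk n)" using G_carrier[OF n a] w by simp
  have nu: "vnorm2 ?u \<le> ?UX" by (rule XHP_bound[OF n a x X])
  have nw: "vnorm2 ?w \<le> ?UZ" by (rule XHP_bound[OF n a z Z])
  have nGw: "vnorm2 (G a n *\<^sub>v ?w) \<le> fro (mat_adjoint (X n)) * (fro (X n) * ?UZ / sw2^2)"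
    by (rule Gw_bound[OF n a w nw])
  have UX0: "0 \<le> ?UX" using nu vnorm2_nonneg[of ?u] by linarith
  have t1: "cmod (conjugate ?u \<bullet> ?w) \<le> 1 + ?UX * ?UZ"
    using cs_lin[OF u w] mult_mono[OF nu nw UX0 vnorm2_nonneg] by linarith
  have t2: "cmod (conjugate ?u \<bullet> (G a n *\<^sub>v ?w)) \<le> 1 + ?UX * (fro (mat_adjoint (X n)) * (fro (X n) * ?UZ / sw2^2))"
    using cs_lin[OF u Gw] mult_mono[OF nu nGw UX0 vnorm2_nonneg] by linarith
  have "cmod (hform x (Q a n d) z) \<le> cmod (conjugate ?u \<bullet> ?w) + cmod (complex_of_real d * (conjugate ?u \<bullet> (G a n *\<^sub>v ?w)))"
    unfolding hform_Q[OF n a x z] by (rule norm_triangle_ineq4)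
  also have "cmod (complex_of_real d * (conjugate ?u \<bullet> (G a n *\<^sub>v ?w))) \<le> cmod (conjugate ?u \<bullet> (G a n *\<^sub>v ?w))"
    using d1 by (simp add: norm_mult mult_left_le_one_le)
  finally show ?thesis using t1 t2 by linarith
qed

lemma p_expand: assumes n: "n < N"
  shows "p_approx N L M s hb R Rh sw2 y a n d = fobj N L M s hb R sw2 y a + d * Re (mtrace (G a n))
    - 2 * d * Re (hform (r a) (P a) (b n)) + d^2 * Re (hform (b n) (P a) (b n))
    - d * Re (hform (r a) (Q a n d) (r a)) + 2 * d^2 * Re (hform (r a) (Q a n d) (b n))
    - d^3 * Re (hform (b n) (Q a n d) (b n))"
  unfolding p_approx_def Let_def P_def[symmetric] G_def[symmetric] X_dim[OF n] Q_def[symmetric] ..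

lemma gradf_eq: assumes n: "n < N" and a: "nonneg a"
  shows "gradf N L M s hb R Rh sw2 y a n = Re (mtrace (G a n)) - vnorm2 (mat_adjoint (X n) *\<^sub>v (P a *\<^sub>v r a))
     - 2 * Re (hform (r a) (P a) (b n))"
proof -
  have "(mat_adjoint (X n) * P a) *\<^sub>v r a = mat_adjoint (X n) *\<^sub>v (P a *\<^sub>v r a)"
    by (rule assoc_mult_mat_vec[OF adj_carrier[OF X_carrier[OF n]] P_carrier[OF a] r_carrier])
  thus ?thesis unfolding gradf_def Let_def P_def[symmetric] G_def[symmetric] by simp
qed

lemma p_bound: assumes n: "n < N" and a: "nonneg a" and rb: "vnorm2 (r a) \<le> \<rho>" and d1: "\<bar>d\<bar> \<le> 1"
  shows "\<bar>p_approx N L M s hb R Rh sw2 y a n d - fobj N L M s hb R sw2 y a - gradf N L M s hb R Rh sw2 y a n * d\<bar>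
    \<le> d^2 * ((1 + vnorm2 (b n) * vnorm2 (b n) / sw2^2)
       + (1 + (fro (mat_adjoint (X n)) * (\<rho> / sw2^2)) * (fro (mat_adjoint (X n)) * (fro (X n) * (fro (mat_adjoint (X n)) * (\<rho> / sw2^2)) / sw2^2)))
       + 2 * (2 + (fro (mat_adjoint (X n)) * (\<rho> / sw2^2)) * (fro (mat_adjoint (X n)) * (vnorm2 (b n) / sw2^2))
     + (fro (mat_adjoint (X n)) * (\<rho> / sw2^2)) * (fro (mat_adjoint (X n)) * (fro (X n) * (fro (mat_adjoint (X n)) * (vnorm2 (b n) / sw2^2)) / sw2^2)))
       + (2 + (fro (mat_adjoint (X n)) * (vnorm2 (b n) / sw2^2)) * (fro (mat_adjoint (X n)) * (vnorm2 (b n) / sw2^2))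
     + (fro (mat_adjoint (X n)) * (vnorm2 (b n) / sw2^2)) * (fro (mat_adjoint (X n)) * (fro (X n) * (fro (mat_adjoint (X n)) * (vnorm2 (b n) / sw2^2)) / sw2^2))))"
proof -
  have r: "r a \<in> carrier_vec m" and bb: "b n \<in> carrier_vec m" using n by auto
  let ?u = "mat_adjoint (X n) *\<^sub>v (P a *\<^sub>v r a)"
  let ?Ur = "fro (mat_adjoint (X n)) * (\<rho> / sw2^2)"
  have XH: "mat_adjoint (X n) \<in> carrier_mat (rk n) m" by (rule adj_carrier[OF X_carrier[OF n]])
  have u: "?u \<in> carrier_vec (rk n)" by (rule mult_mat_vec_carrier[OF XH mult_mat_vec_carrier[OF P_carrier[OF a] r]])
  have Gu: "G a n *\<^sub>v ?u \<in> carrier_vec (rk n)" using G_carrier[OF n a] u by simp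
  have nu: "vnorm2 ?u \<le> ?Ur" by (rule XHP_bound[OF n a r rb])
  have nGu: "vnorm2 (G a n *\<^sub>v ?u) \<le> fro (mat_adjoint (X n)) * (fro (X n) * ?Ur / sw2^2)"
    by (rule Gw_bound[OF n a u nu])
  have Ur0: "0 \<le> ?Ur" using nu vnorm2_nonneg[of ?u] by linarith
  have QR: "hform (r a) (Q a n d) (r a) = complex_of_real (vnorm2 ?u) - complex_of_real d * (conjugate ?u \<bullet> (G a n *\<^sub>v ?u))"
    unfolding hform_Q[OF n a r r] conj_sprod_self ..
  have e: "p_approx N L M s hb R Rh sw2 y a n d - fobj N L M s hb R sw2 y a - gradf N L M s hb R Rh sw2 y a n * d
    = d^2 * Re (hform (b n) (P a) (b n)) + d^2 * Re (conjugate ?u \<bullet> (G a n *\<^sub>v ?u))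
      + 2 * d^2 * Re (hform (r a) (Q a n d) (b n)) - d^3 * Re (hform (b n) (Q a n d) (b n))"
    unfolding p_expand[OF n] gradf_eq[OF n a] QR by (simp add: algebra_simps power2_eq_square)
  have c1: "\<bar>Re (hform (b n) (P a) (b n))\<bar> \<le> 1 + vnorm2 (b n) * vnorm2 (b n) / sw2^2"
    using abs_Re_le_cmod[of "hform (b n) (P a) (b n)"] spP_bound[OF a bb bb order_refl order_refl]
    unfolding hform_def by linarith
  have c2: "\<bar>Re (conjugate ?u \<bullet> (G a n *\<^sub>v ?u))\<bar> \<le> 1 + ?Ur * (fro (mat_adjoint (X n)) * (fro (X n) * ?Ur / sw2^2))"
    using abs_Re_le_cmod[of "conjugate ?u \<bullet> (G a n *\<^sub>v ?u)"] cs_lin[OF u Gu] mult_mono[OF nu nGu Ur0 vnorm2_nonneg]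
    by linarith
  have c3: "\<bar>Re (hform (r a) (Q a n d) (b n))\<bar> \<le> 2 + ?Ur * (fro (mat_adjoint (X n)) * (vnorm2 (b n) / sw2^2))
     + ?Ur * (fro (mat_adjoint (X n)) * (fro (X n) * (fro (mat_adjoint (X n)) * (vnorm2 (b n) / sw2^2)) / sw2^2))"
    using abs_Re_le_cmod[of "hform (r a) (Q a n d) (b n)"] hQ_bound[OF n a r bb rb order_refl d1] by linarith
  have c4: "\<bar>Re (hform (b n) (Q a n d) (b n))\<bar> \<le> 2 + (fro (mat_adjoint (X n)) * (vnorm2 (b n) / sw2^2)) * (fro (mat_adjoint (X n)) * (vnorm2 (b n) / sw2^2))
     + (fro (mat_adjoint (X n)) * (vnorm2 (b n) / sw2^2)) * (fro (mat_adjoint (X n)) * (fro (X n) * (fro (mat_adjoint (X n)) * (vnorm2 (b n) / sw2^2)) / sw2^2))"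
    using abs_Re_le_cmod[of "hform (b n) (Q a n d) (b n)"] hQ_bound[OF n a bb bb order_refl order_refl d1] by linarith
  show ?thesis unfolding e by (rule real_help[OF c1 c2 c3 c4 d1])
qed

end

context prb
begin

definition "rho = (\<Sum>i<m. (cmod (y $ i) + (\<Sum>k<N. cmod (b k $ i)))^2)"

lemma inbox_nonneg: "in_box N a \<Longrightarrow> nonneg a"
  unfolding in_box_def nonneg_def by auto

lemma r_bound: assumes a: "in_box N a" shows "vnorm2 (r a) \<le> rho"
proof -
  have "vnorm2 (r a) = (\<Sum>i<m. (cmod (r a $ i))^2)" unfolding vnorm2_def by simp
  also have "\<dots> \<le> rho" unfolding rho_def
  proof (rule sum_mono)
    fix i assume "i \<in> {..<m}"
    hence i: "i < m" by simp
    have e: "r a $ i = y $ i - (\<Sum>k<N. complex_of_real (a k) * b k $ i)"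
      unfolding resid_def ybar_def using i y by simp
    have "cmod (r a $ i) \<le> cmod (y $ i) + cmod (\<Sum>k<N. complex_of_real (a k) * b k $ i)"
      unfolding e by (rule norm_triangle_ineq4)
    also have "cmod (\<Sum>k<N. complex_of_real (a k) * b k $ i) \<le> (\<Sum>k<N. cmod (complex_of_real (a k) * b k $ i))"
      by (rule norm_sum)
    also have "\<dots> \<le> (\<Sum>k<N. cmod (b k $ i))"
    proof (rule sum_mono)
      fix k assume "k \<in> {..<N}"
      hence "0 \<le> a k" "a k \<le> 1" using a unfolding in_box_def by auto
      thus "cmod (complex_of_real (a k) * b k $ i) \<le> cmod (b k $ i)"
        by (simp add: norm_mult mult_left_le_one_le)
    qed
    finally have "cmod (r a $ i) \<le> cmod (y $ i) + (\<Sum>k<N. cmod (b k $ i))" by simp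
    thus "(cmod (r a $ i))^2 \<le> (cmod (y $ i) + (\<Sum>k<N. cmod (b k $ i)))^2"
      by (intro power_mono) auto
  qed
  finally show ?thesis .
qed

lemma per_n: assumes n: "n < N"
  shows "\<exists>K\<ge>0. \<forall>a d. in_box N a \<longrightarrow> 0 \<le> a n + d \<longrightarrow> a n + d \<le> 1 \<longrightarrow>
     fobj N L M s hb R sw2 y (a(n := a n + d)) \<le> fobj N L M s hb R sw2 y a + gradf N L M s hb R Rh sw2 y a n * d + K * d^2
   \<and> \<bar>p_approx N L M s hb R Rh sw2 y a n d - fobj N L M s hb R sw2 y a - gradf N L M s hb R Rh sw2 y a n * d\<bar> \<le> K * d^2"
proof -
  define KD where "KD = (1 + fro (Bn n) / sw2^2) * m^2 * (2 + fro (Bn n) / sw2^2) ^ m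
      + card {p. p permutes {0..<m}} * ((1 + fro (Bn n) / sw2^2)^2 * (2 + fro (Bn n) / sw2^2) ^ m)"
  define KQ where "KQ = (4 + (rho * (fro (Bn n) / sw2^2 * (fro (Bn n) / sw2^2 * rho)) + rho * (fro (Bn n) / sw2^2 * vnorm2 (b n))
            + vnorm2 (b n) * (fro (Bn n) / sw2^2 * rho) + vnorm2 (b n) * vnorm2 (b n)) / sw2^2)"
  define KP where "KP = ((1 + vnorm2 (b n) * vnorm2 (b n) / sw2^2)
       + (1 + (fro (mat_adjoint (X n)) * (rho / sw2^2)) * (fro (mat_adjoint (X n)) * (fro (X n) * (fro (mat_adjoint (X n)) * (rho / sw2^2)) / sw2^2)))
       + 2 * (2 + (fro (mat_adjoint (X n)) * (rho / sw2^2)) * (fro (mat_adjoint (X n)) * (vnorm2 (b n) / sw2^2))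
     + (fro (mat_adjoint (X n)) * (rho / sw2^2)) * (fro (mat_adjoint (X n)) * (fro (X n) * (fro (mat_adjoint (X n)) * (vnorm2 (b n) / sw2^2)) / sw2^2)))
       + (2 + (fro (mat_adjoint (X n)) * (vnorm2 (b n) / sw2^2)) * (fro (mat_adjoint (X n)) * (vnorm2 (b n) / sw2^2))
     + (fro (mat_adjoint (X n)) * (vnorm2 (b n) / sw2^2)) * (fro (mat_adjoint (X n)) * (fro (X n) * (fro (mat_adjoint (X n)) * (vnorm2 (b n) / sw2^2)) / sw2^2))))"
  define K where "K = \<bar>KD\<bar> + \<bar>KQ\<bar> + \<bar>KP\<bar>"
  show ?thesis
  proof (intro exI[of _ K] conjI allI impI)
    show "0 \<le> K" unfolding K_def by simp
    fix a d assume a: "in_box N a" and ad: "0 \<le> a n + d" and ad1: "a n + d \<le> 1"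
    have an: "nonneg a" by (rule inbox_nonneg[OF a])
    have a01: "0 \<le> a n" "a n \<le> 1" using a n unfolding in_box_def by auto
    have d1: "\<bar>d\<bar> \<le> 1" using a01 ad ad1 by linarith
    have rb: "vnorm2 (r a) \<le> rho" by (rule r_bound[OF a])
    have d2: "0 \<le> d^2" by simp
    have LD: "ln (Re (det (S (a(n := a n + d))))) \<le> ln (Re (det (S a))) + d * Re (mtrace (mat_adjoint (X n) * P a * X n)) + d^2 * KD"
      unfolding KD_def by (rule logdet_bound[OF n an ad d1])
    have QB: "Re (hform (r (a(n := a n + d))) (P (a(n := a n + d))) (r (a(n := a n + d))))
      \<le> Re (hform (r a) (P a) (r a)) - d * vnorm2 (mat_adjoint (X n) *\<^sub>v (P a *\<^sub>v r a))
       - 2 * d * Re (hform (r a) (P a) (b n)) + d^2 * KQ"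
      unfolding KQ_def by (rule quad_bound[OF n an ad rb])
    have PB: "\<bar>p_approx N L M s hb R Rh sw2 y a n d - fobj N L M s hb R sw2 y a - gradf N L M s hb R Rh sw2 y a n * d\<bar> \<le> d^2 * KP"
      unfolding KP_def by (rule p_bound[OF n an rb d1])
    have KDK: "d^2 * KD + d^2 * KQ \<le> K * d^2"
    proof -
      have "d^2 * KD + d^2 * KQ \<le> d^2 * \<bar>KD\<bar> + d^2 * \<bar>KQ\<bar>" using d2 by (intro add_mono mult_left_mono) auto
      also have "\<dots> \<le> d^2 * K" unfolding K_def using d2 by (simp add: distrib_left)
      finally show ?thesis by (simp add: mult.commute)
    qed
    have KPK: "d^2 * KP \<le> K * d^2"
    proof -
      have "d^2 * KP \<le> d^2 * \<bar>KP\<bar>" using d2 by (intro mult_left_mono) auto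
      also have "\<dots> \<le> d^2 * K" unfolding K_def using d2 by (intro mult_left_mono) auto
      finally show ?thesis by (simp add: mult.commute)
    qed
    have g: "gradf N L M s hb R Rh sw2 y a n = Re (mtrace (mat_adjoint (X n) * P a * X n)) - vnorm2 (mat_adjoint (X n) *\<^sub>v (P a *\<^sub>v r a))
     - 2 * Re (hform (r a) (P a) (b n))" using gradf_eq[OF n an] unfolding G_def .
    have f1: "fobj N L M s hb R sw2 y (a(n := a n + d)) = ln (Re (det (S (a(n := a n + d)))))
       + Re (hform (r (a(n := a n + d))) (P (a(n := a n + d))) (r (a(n := a n + d))))"
      unfolding fobj_def P_def ..
    have f0: "fobj N L M s hb R sw2 y a = ln (Re (det (S a))) + Re (hform (r a) (P a) (r a))"
      unfolding fobj_def P_def ..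
    show "fobj N L M s hb R sw2 y (a(n := a n + d)) \<le> fobj N L M s hb R sw2 y a + gradf N L M s hb R Rh sw2 y a n * d + K * d^2"
      unfolding f1 f0 g using LD QB KDK by (simp add: algebra_simps)
    show "\<bar>p_approx N L M s hb R Rh sw2 y a n d - fobj N L M s hb R sw2 y a - gradf N L M s hb R Rh sw2 y a n * d\<bar> \<le> K * d^2"
      using PB KPK by linarith
  qed
qed

end

context prb
begin

lemma Vres_eq: "Vres N L M s hb R Rh sw2 y a n = \<bar>max (- a n) (min (1 - a n) (- gradf N L M s hb R Rh sw2 y a n))\<bar>"
proof -
  have "proj01 (a n - gradf N L M s hb R Rh sw2 y a n) - a n = max (- a n) (min (1 - a n) (- gradf N L M s hb R Rh sw2 y a n))"
    unfolding proj01_def by (auto simp: max_def min_def)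
  thus ?thesis unfolding Vres_def by simp
qed

lemma main: assumes ell: "ell > 0"
  shows "\<exists>c>0. \<forall>a n mu dbar. in_box N a \<longrightarrow> n < N \<longrightarrow> mu \<ge> ell + c \<longrightarrow>
           dbar \<in> {- a n .. 1 - a n} \<longrightarrow>
           (\<forall>d \<in> {- a n .. 1 - a n}.
              p_approx N L M s hb R Rh sw2 y a n dbar + mu / 2 * dbar^2
                \<le> p_approx N L M s hb R Rh sw2 y a n d + mu / 2 * d^2) \<longrightarrow>
           fobj N L M s hb R sw2 y (a(n := a n + dbar))
             \<le> fobj N L M s hb R sw2 y a
                - (Vres N L M s hb R Rh sw2 y a n)^2 / (2 * (mu + c))"
proof -
  have "\<forall>n\<in>{..<N}. \<exists>K\<ge>0. \<forall>a d. in_box N a \<longrightarrow> 0 \<le> a n + d \<longrightarrow> a n + d \<le> 1 \<longrightarrow>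
     fobj N L M s hb R sw2 y (a(n := a n + d)) \<le> fobj N L M s hb R sw2 y a + gradf N L M s hb R Rh sw2 y a n * d + K * d^2
   \<and> \<bar>p_approx N L M s hb R Rh sw2 y a n d - fobj N L M s hb R sw2 y a - gradf N L M s hb R Rh sw2 y a n * d\<bar> \<le> K * d^2"
    using per_n by blast
  then obtain Kf where Kf: "\<And>n. n \<in> {..<N} \<Longrightarrow> Kf n \<ge> 0 \<and> (\<forall>a d. in_box N a \<longrightarrow> 0 \<le> a n + d \<longrightarrow> a n + d \<le> 1 \<longrightarrow>
     fobj N L M s hb R sw2 y (a(n := a n + d)) \<le> fobj N L M s hb R sw2 y a + gradf N L M s hb R Rh sw2 y a n * d + Kf n * d^2
   \<and> \<bar>p_approx N L M s hb R Rh sw2 y a n d - fobj N L M s hb R sw2 y a - gradf N L M s hb R Rh sw2 y a n * d\<bar> \<le> Kf n * d^2)"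
    by (metis (no_types, lifting) bchoice)
  define K where "K = (\<Sum>n<N. Kf n)"
  have K0: "0 \<le> K" unfolding K_def using Kf by (intro sum_nonneg) auto
  have KK: "Kf n \<le> K" if "n < N" for n
    unfolding K_def using Kf that by (intro member_le_sum) auto
  define c where "c = 1 + 4 * K"
  show ?thesis
  proof (intro exI[of _ c] conjI allI impI)
    show "c > 0" unfolding c_def using K0 by simp
    fix a n mu dbar
    assume a: "in_box N a" and n: "n < N" and mu: "ell + c \<le> mu" and db: "dbar \<in> {- a n .. 1 - a n}"
      and mn: "\<forall>d \<in> {- a n .. 1 - a n}. p_approx N L M s hb R Rh sw2 y a n dbar + mu / 2 * dbar^2
                \<le> p_approx N L M s hb R Rh sw2 y a n d + mu / 2 * d^2"
    have a01: "0 \<le> a n" "a n \<le> 1" using a n unfolding in_box_def by auto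
    note Kn = Kf[of n] KK[OF n]
    have A: "fobj N L M s hb R sw2 y (a(n := a n + dbar)) \<le> fobj N L M s hb R sw2 y a + gradf N L M s hb R Rh sw2 y a n * dbar + K * dbar^2"
    proof -
      have "fobj N L M s hb R sw2 y (a(n := a n + dbar)) \<le> fobj N L M s hb R sw2 y a + gradf N L M s hb R Rh sw2 y a n * dbar + Kf n * dbar^2"
        using Kn n a db by auto
      moreover have "Kf n * dbar^2 \<le> K * dbar^2" using Kn n by (intro mult_right_mono) auto
      ultimately show ?thesis by linarith
    qed
    have B: "\<bar>p_approx N L M s hb R Rh sw2 y a n d - fobj N L M s hb R sw2 y a - gradf N L M s hb R Rh sw2 y a n * d\<bar> \<le> K * d^2"
      if d: "d \<in> {- a n .. 1 - a n}" for d
    proof -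
      have "\<bar>p_approx N L M s hb R Rh sw2 y a n d - fobj N L M s hb R sw2 y a - gradf N L M s hb R Rh sw2 y a n * d\<bar> \<le> Kf n * d^2"
        using Kn n a d by auto
      moreover have "Kf n * d^2 \<le> K * d^2" using Kn n by (intro mult_right_mono) auto
      ultimately show ?thesis by linarith
    qed
    have muc: "c \<le> mu" using mu ell by simp
    show "fobj N L M s hb R sw2 y (a(n := a n + dbar)) \<le> fobj N L M s hb R sw2 y a - (Vres N L M s hb R Rh sw2 y a n)^2 / (2 * (mu + c))"
      by (rule prox[where phi = "\<lambda>d. fobj N L M s hb R sw2 y (a(n := a n + d))" and p = "\<lambda>d. p_approx N L M s hb R Rh sw2 y a n d"
            and lo = "- a n" and hi = "1 - a n", OF _ _ K0 c_def muc A B db _ Vres_eq])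
         (use a01 mn in auto)
  qed
qed

end

theorem theorem1:
  fixes N L M :: nat and sw2 ell :: real
    and s hb :: "nat \<Rightarrow> complex vec" and R Rh :: "nat \<Rightarrow> complex mat" and y :: "complex vec"
  assumes "L > 0" and "M > 0" and "N > 0" and "sw2 > 0"
    and "\<forall>n<N. s n \<in> carrier_vec L"
    and "\<forall>n<N. hb n \<in> carrier_vec M"
    and "\<forall>n<N. hermitian_psd M (R n)"
    and "\<forall>n<N. Rh n \<in> carrier_mat M (vec_space.rank M (R n))"
    and "\<forall>n<N. Rh n * mat_adjoint (Rh n) = R n"
    and "y \<in> carrier_vec (M*L)"
    and "ell > 0"
    and "\<forall>a b. in_box N a \<longrightarrow> in_box N b \<longrightarrow>
           sqrt (\<Sum>n<N. (gradf N L M s hb R Rh sw2 y a n - gradf N L M s hb R Rh sw2 y b n)^2)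
             \<le> ell * sqrt (\<Sum>n<N. (a n - b n)^2)"
  shows "\<exists>c>0. \<forall>a n mu dbar. in_box N a \<longrightarrow> n < N \<longrightarrow> mu \<ge> ell + c \<longrightarrow>
           dbar \<in> {- a n .. 1 - a n} \<longrightarrow>
           (\<forall>d \<in> {- a n .. 1 - a n}.
              p_approx N L M s hb R Rh sw2 y a n dbar + mu / 2 * dbar^2
                \<le> p_approx N L M s hb R Rh sw2 y a n d + mu / 2 * d^2) \<longrightarrow>
           fobj N L M s hb R sw2 y (a(n := a n + dbar))
             \<le> fobj N L M s hb R sw2 y a
                - (Vres N L M s hb R Rh sw2 y a n)^2 / (2 * (mu + c))"
proof -
  interpret prb N L M sw2 s hb R Rh y
  proof
    fix n assume n: "n < N"
    have "Rh n \<in> carrier_mat M (vec_space.rank M (R n))" using assms(8) n by blast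
    hence "dim_row (Rh n) = M" by (rule carrier_matD(1))
    thus "Rh n \<in> carrier_mat M (dim_col (Rh n))" by (rule carrier_matI) simp
  qed (use assms in auto)
  show ?thesis by (rule main[OF assms(11)])
qed


end
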